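(* Let $\Gamma$ be a group and $\Gamma_0<\Gamma$ a finite-index normal subgroup. Suppose $\Gamma_0$ embeds as a $P_1$-Anosov subgroup of $\mathsf{SL}_d(\mathbb{R})$, i.e. there is a faithful $P_1$-Anosov representation $\Gamma_0\to\mathsf{SL}_d(\mathbb{R})$. Then there exist $r\in\mathbb{N}$ and a faithful $P_1$-Anosov representation $\Gamma\to\mathsf{SL}_r(\mathbb{R})$.
   Context: For $g\in\mathsf{SL}_d(\mathbb{R})$, let $\mu_1(g)\ge\mu_2(g)\ge\dots\ge\mu_d(g)$ be the logarithms of the singular values of $g$ (with multiplicity). For a finitely generated group $\Lambda$ with word length $|\cdot|_\Lambda$ with respect to a fixed finite generating set, a representation $\rho:\Lambda\to\mathsf{SL}_d(\mathbb{R})$ is $P_i$-Anosov ($1\le i\le d-1$) if there are constants $c,C>0$ such that $\mu_i(\rho(\gamma))-\mu_{i+1}(\rho(\gamma))\ge c|\gamma|_\Lambda - C$ for all $\gamma\in\Lambda$. A $P_1$-Anosov subgroup is the image of a $P_1$-Anosov representation. *)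

theory Defs
  imports "HOL-Algebra.Generated_Groups" "HOL-Algebra.Coset"
          "Jordan_Normal_Form.Char_Poly" "Jordan_Normal_Form.Determinant"
begin

(* Eigenvalues of a square real matrix A with multiplicity, listed in non-increasing order,
   provided the characteristic polynomial splits over the reals (as it does for the
   symmetric matrices A = g^T g used below). *)
definition eigs_desc :: "real mat \<Rightarrow> real list" where
  "eigs_desc A = (THE ls. sorted_wrt (\<ge>) ls \<and>
       char_poly A = prod_list (map (\<lambda>a. [:- a, 1:]) ls))"

definition sing_sq :: "real mat \<Rightarrow> real list" where
  "sing_sq g = eigs_desc (transpose_mat g * g)"

(* mu i g = log of the i-th singular value (1-based), i.e. log sqrt of i-th eigenvalue of g^T g *)
definition mu :: "nat \<Rightarrow> real mat \<Rightarrow> real" where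
  "mu i g = ln (sqrt (sing_sq g ! (i - 1)))"

(* Evaluation of a word in generators and their inverses (True = generator, False = inverse) *)
definition word_eval :: "('a, 'b) monoid_scheme \<Rightarrow> ('a \<times> bool) list \<Rightarrow> 'a" where
  "word_eval G ws = foldr (\<lambda>(s, b) x. (if b then s else inv\<^bsub>G\<^esub> s) \<otimes>\<^bsub>G\<^esub> x) ws \<one>\<^bsub>G\<^esub>"

definition word_length :: "('a, 'b) monoid_scheme \<Rightarrow> 'a set \<Rightarrow> 'a \<Rightarrow> nat" where
  "word_length G S g = (LEAST n. \<exists>ws. length ws = n \<and> fst ` set ws \<subseteq> S \<and> word_eval G ws = g)"

definition SL_rep :: "('a, 'b) monoid_scheme \<Rightarrow> nat \<Rightarrow> ('a \<Rightarrow> real mat) \<Rightarrow> bool" where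
  "SL_rep G d \<rho> \<longleftrightarrow>
     (\<forall>g\<in>carrier G. \<rho> g \<in> carrier_mat d d \<and> det (\<rho> g) = 1) \<and>
     (\<forall>g\<in>carrier G. \<forall>h\<in>carrier G. \<rho> (g \<otimes>\<^bsub>G\<^esub> h) = \<rho> g * \<rho> h)"

definition faithful :: "('a, 'b) monoid_scheme \<Rightarrow> ('a \<Rightarrow> real mat) \<Rightarrow> bool" where
  "faithful G \<rho> \<longleftrightarrow> inj_on \<rho> (carrier G)"

definition P_Anosov :: "('a, 'b) monoid_scheme \<Rightarrow> nat \<Rightarrow> nat \<Rightarrow> ('a \<Rightarrow> real mat) \<Rightarrow> bool" where
  "P_Anosov G d i \<rho> \<longleftrightarrow> SL_rep G d \<rho> \<and> 1 \<le> i \<and> i + 1 \<le> d \<and>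
     (\<exists>S. finite S \<and> S \<subseteq> carrier G \<and> generate G S = carrier G \<and>
        (\<exists>c C. c > 0 \<and> C > 0 \<and>
           (\<forall>\<gamma>\<in>carrier G. mu i (\<rho> \<gamma>) - mu (i + 1) (\<rho> \<gamma>) \<ge> c * real (word_length G S \<gamma>) - C)))"

end

theory Submission
  imports Defs "Jordan_Normal_Form.Schur_Decomposition"
begin

lemma conj_real_mat_vec:
  fixes A :: "real mat" and v :: "complex vec"
  assumes A: "A \<in> carrier_mat n n" and v: "v \<in> carrier_vec n"
  shows "conjugate (map_mat complex_of_real A *\<^sub>v v) = map_mat complex_of_real A *\<^sub>v conjugate v"
proof (rule eq_vecI)
  fix i assume i: "i < dim_vec (map_mat complex_of_real A *\<^sub>v conjugate v)"
  hence i': "i < n" using A by auto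
  have "conjugate (map_mat complex_of_real A *\<^sub>v v) $ i = cnj (\<Sum>j<n. of_real (A $$ (i,j)) * v $ j)"
    using A v i' by (simp add: scalar_prod_def atLeast0LessThan)
  also have "\<dots> = (\<Sum>j<n. of_real (A $$ (i,j)) * cnj (v $ j))" by simp
  also have "\<dots> = (map_mat complex_of_real A *\<^sub>v conjugate v) $ i"
    using A v i' by (simp add: scalar_prod_def atLeast0LessThan)
  finally show "conjugate (map_mat complex_of_real A *\<^sub>v v) $ i = (map_mat complex_of_real A *\<^sub>v conjugate v) $ i" .
qed (insert A v, auto)

lemma complex_pos_div:
  fixes a p q :: complex
  assumes "p > 0" "q > 0" "a * p = q"
  shows "a > 0"
proof -
  have "a = q / p" using assms by (auto simp: field_simps)
  moreover have "Im p = 0" "Re p > 0" "Im q = 0" "Re q > 0" using assms by (auto simp: less_complex_def)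
  ultimately show ?thesis by (auto simp: less_complex_def Re_divide Im_divide)
qed

lemma eig_AtA_pos:
  fixes A :: "real mat"
  assumes A: "A \<in> carrier_mat n n" and dA: "det A \<noteq> 0"
    and ev: "eigenvalue (map_mat complex_of_real (transpose_mat A * A)) a"
  shows "a > 0"
proof -
  let ?A = "map_mat complex_of_real A"
  have A': "?A \<in> carrier_mat n n" using A by auto
  have B': "map_mat complex_of_real (transpose_mat A * A) = transpose_mat ?A * ?A"
    using A by (simp add: of_real_hom.mat_hom_mult map_mat_transpose)
  from ev obtain v where v: "v \<in> carrier_vec n" "v \<noteq> 0\<^sub>v n"
    and Bv: "(transpose_mat ?A * ?A) *\<^sub>v v = a \<cdot>\<^sub>v v"
    unfolding eigenvalue_def eigenvector_def B' using A by auto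
  have "det ?A \<noteq> 0" using A dA by (simp add: of_real_hom.hom_det)
  hence w0: "?A *\<^sub>v v \<noteq> 0\<^sub>v n" using det_0_iff_vec_prod_zero[OF A'] v by auto
  have "conjugate v \<bullet> ((transpose_mat ?A * ?A) *\<^sub>v v) = a * (conjugate v \<bullet> v)"
    using v by (simp add: Bv scalar_prod_smult_distrib[of _ n])
  moreover have "conjugate v \<bullet> ((transpose_mat ?A * ?A) *\<^sub>v v) = (?A *\<^sub>v conjugate v) \<bullet> (?A *\<^sub>v v)"
  proof -
    have "(transpose_mat ?A * ?A) *\<^sub>v v = transpose_mat ?A *\<^sub>v (?A *\<^sub>v v)"
      using A' v by (simp add: assoc_mult_mat_vec[of _ n n _ n])
    hence "conjugate v \<bullet> ((transpose_mat ?A * ?A) *\<^sub>v v) = conjugate v \<bullet> (transpose_mat ?A *\<^sub>v (?A *\<^sub>v v))" by simp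
    also have "\<dots> = (transpose_mat (transpose_mat ?A) *\<^sub>v conjugate v) \<bullet> (?A *\<^sub>v v)"
      by (rule transpose_vec_mult_scalar[symmetric, of _ n n], insert A' v, auto)
    finally show ?thesis by simp
  qed
  moreover have "(?A *\<^sub>v conjugate v) \<bullet> (?A *\<^sub>v v) = (?A *\<^sub>v v) \<bullet>c (?A *\<^sub>v v)"
    using conj_real_mat_vec[OF A v(1)] A' v
    by (metis carrier_vec_conjugate comm_scalar_prod mult_mat_vec_carrier)
  moreover have "(?A *\<^sub>v v) \<bullet>c (?A *\<^sub>v v) > 0"
    using w0 A' v by (subst conjugate_square_greater_0_vec[of _ n], auto)
  moreover have "conjugate v \<bullet> v > 0"
    using v conjugate_square_greater_0_vec[of v n] conjugate_vec_sprod_comm[of v n v] by auto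
  ultimately show ?thesis using complex_pos_div by metis
qed

lemma map_poly_of_real_mult:
  "map_poly complex_of_real (p * q) = map_poly complex_of_real p * map_poly complex_of_real q"
  by (rule poly_eqI) (simp add: coeff_mult coeff_map_poly)

lemma map_poly_of_real_lin:
  "map_poly complex_of_real (\<Prod>b\<leftarrow>bs. [:-b, 1:]) = (\<Prod>b\<leftarrow>map complex_of_real bs. [:-b, 1:])"
proof (induction bs)
  case (Cons a bs)
  show ?case by (simp only: list.map prod_list.Cons map_poly_of_real_mult Cons) simp
qed simp

lemma map_poly_of_real_inj:
  assumes "map_poly complex_of_real p = map_poly complex_of_real q"
  shows "p = q"
proof (rule poly_eqI)
  fix i
  have "coeff (map_poly complex_of_real p) i = coeff (map_poly complex_of_real q) i" using assms by simp
  thus "coeff p i = coeff q i" by (simp add: coeff_map_poly)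
qed

lemma AtA_split:
  fixes A :: "real mat"
  assumes A: "A \<in> carrier_mat n n" and dA: "det A \<noteq> 0"
  shows "\<exists>bs. char_poly (transpose_mat A * A) = (\<Prod>b\<leftarrow>bs. [:-b, 1:]) \<and> (\<forall>b\<in>set bs. b > 0) \<and> length bs = n"
proof -
  let ?B = "transpose_mat A * A"
  have B: "?B \<in> carrier_mat n n" using A by auto
  have B': "map_mat complex_of_real ?B \<in> carrier_mat n n" using B by auto
  obtain as where as: "char_poly (map_mat complex_of_real ?B) = (\<Prod>a\<leftarrow>as. [:- a, 1:])" "length as = n"
    using char_poly_factorized[OF B'] by blast
  have pos: "a > 0" if "a \<in> set as" for a
  proof -
    have "poly (char_poly (map_mat complex_of_real ?B)) a = 0"
      unfolding as(1) using that by (simp add: poly_prod_list_zero_iff)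
    hence "eigenvalue (map_mat complex_of_real ?B) a" using eigenvalue_root_char_poly[OF B'] by simp
    thus ?thesis using eig_AtA_pos[OF A dA] by blast
  qed
  define bs where "bs = map Re as"
  have "\<forall>x\<in>set as. complex_of_real (Re x) = x" using pos by (auto simp: less_complex_def complex_eq_iff)
  hence "map (\<lambda>x. complex_of_real (Re x)) as = as" by (induct as) auto
  hence asbs: "as = map complex_of_real bs" unfolding bs_def by (simp add: comp_def)
  have ch: "char_poly (map_mat complex_of_real ?B) = map_poly complex_of_real (char_poly ?B)"
    by (rule of_real_hom.char_poly_hom[OF B])
  have "map_poly complex_of_real (char_poly ?B) = map_poly complex_of_real (\<Prod>b\<leftarrow>bs. [:-b, 1:])"
    unfolding map_poly_of_real_lin asbs[symmetric] as(1)[symmetric] ch ..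
  hence "char_poly ?B = (\<Prod>b\<leftarrow>bs. [:-b, 1:])" by (rule map_poly_of_real_inj)
  moreover have "\<forall>b\<in>set bs. b > 0" using pos unfolding bs_def by (auto simp: less_complex_def)
  moreover have "length bs = n" using as(2) bs_def by simp
  ultimately show ?thesis by blast
qed

lemma prod_list_lin_perm:
  assumes "mset xs = mset ys"
  shows "(\<Prod>x\<leftarrow>xs. g x) = (\<Prod>x\<leftarrow>ys. (g x :: 'b :: comm_monoid_mult))"
proof -
  have "(\<Prod>x\<leftarrow>xs. g x) = prod_mset (image_mset g (mset xs))"
    by (simp add: prod_mset_prod_list[symmetric])
  also have "\<dots> = prod_mset (image_mset g (mset ys))" using assms by simp
  also have "\<dots> = (\<Prod>x\<leftarrow>ys. g x)" by (simp add: prod_mset_prod_list[symmetric])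
  finally show ?thesis .
qed

lemma lin_nz: "[:-(a::real), 1:] \<noteq> 0" by simp

lemma lin_prod_mset:
  fixes xs ys :: "real list"
  assumes "(\<Prod>x\<leftarrow>xs. [:-x, 1:]) = (\<Prod>y\<leftarrow>ys. [:-y, 1:])"
  shows "mset xs = mset ys"
  using assms
proof (induction xs arbitrary: ys)
  case Nil
  show ?case
  proof (cases ys)
    case (Cons y ys')
    have "poly (\<Prod>y\<leftarrow>ys. [:-y, 1:]) y = 0" unfolding Cons by (simp only: list.map prod_list.Cons poly_mult) simp
    moreover have "poly (\<Prod>y\<leftarrow>ys. [:-y, 1:]) y = 1" unfolding Nil.prems[symmetric] by simp
    ultimately show ?thesis by simp
  qed simp
next
  case (Cons a xs)
  have "poly (\<Prod>x\<leftarrow>a#xs. [:-x, 1:]) a = 0" by (simp only: list.map prod_list.Cons poly_mult) simp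
  hence "poly (\<Prod>y\<leftarrow>ys. [:-y, 1:]) a = 0" unfolding Cons.prems .
  hence a: "a \<in> set ys" unfolding poly_prod_list_zero_iff by auto
  hence m: "mset ys = mset (a # remove1 a ys)" by simp
  have "[:-a, 1:] * (\<Prod>x\<leftarrow>xs. [:-x, 1:]) = (\<Prod>x\<leftarrow>a#xs. [:-x, 1:])" by (simp only: list.map prod_list.Cons)
  also have "\<dots> = (\<Prod>y\<leftarrow>ys. [:-y, 1:])" by (rule Cons.prems)
  also have "\<dots> = (\<Prod>y\<leftarrow>a # remove1 a ys. [:-y, 1:])" by (rule prod_list_lin_perm[OF m])
  also have "\<dots> = [:-a, 1:] * (\<Prod>y\<leftarrow>remove1 a ys. [:-y, 1:])" by (simp only: list.map prod_list.Cons)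
  finally have "(\<Prod>x\<leftarrow>xs. [:-x, 1:]) = (\<Prod>y\<leftarrow>remove1 a ys. [:-y, 1:])"
    using mult_left_cancel[OF lin_nz[of a]] by blast
  from Cons.IH[OF this] have "mset xs = mset (remove1 a ys)" .
  hence "mset (a # xs) = mset (a # remove1 a ys)" by (simp only: mset.simps)
  thus ?case using m by (rule trans[OF _ sym])
qed

lemma sorted_desc_unique:
  fixes xs ys :: "real list"
  assumes "sorted_wrt (\<ge>) xs" "sorted_wrt (\<ge>) ys" "mset xs = mset ys"
  shows "xs = ys"
proof -
  have s1: "sorted (rev xs)" using assms(1) by (simp add: sorted_wrt_rev)
  have s2: "sorted (rev ys)" using assms(2) by (simp add: sorted_wrt_rev)
  have "sort (rev ys) = rev xs" by (rule properties_for_sort, insert assms(3) s1, auto)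
  moreover have "sort (rev ys) = rev ys" by (rule properties_for_sort, insert s2, auto)
  ultimately show ?thesis by simp
qed

lemma eigs_desc_eq:
  assumes "sorted_wrt (\<ge>) ls" "char_poly X = (\<Prod>x\<leftarrow>ls. [:-x, 1:])"
  shows "eigs_desc X = ls"
  unfolding eigs_desc_def
proof (rule the_equality)
  fix ls' assume h: "sorted_wrt (\<ge>) ls' \<and> char_poly X = (\<Prod>a\<leftarrow>ls'. [:- a, 1:])"
  hence "(\<Prod>a\<leftarrow>ls'. [:- a, 1:]) = (\<Prod>a\<leftarrow>ls. [:- a, 1:])" using assms(2) by (metis (no_types))
  hence "mset ls' = mset ls" by (rule lin_prod_mset)
  thus "ls' = ls" using h assms(1) sorted_desc_unique by blast
next
  show "sorted_wrt (\<ge>) ls \<and> char_poly X = (\<Prod>a\<leftarrow>ls. [:- a, 1:])" using assms by blast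
qed

lemma gap_lemma:
  fixes f :: "nat \<Rightarrow> real"
  assumes cp: "char_poly X = (\<Prod>p\<leftarrow>[0..<n]. [:-f p, 1:])"
    and n: "2 \<le> n" and p0: "p0 < n"
    and pos: "\<And>p. p < n \<Longrightarrow> 0 < f p"
    and bnd: "\<And>p. p < n \<Longrightarrow> p \<noteq> p0 \<Longrightarrow> f p \<le> \<beta>"
    and top: "\<beta> \<le> f p0"
  shows "eigs_desc X ! 0 = f p0 \<and> 0 < eigs_desc X ! 1 \<and> eigs_desc X ! 1 \<le> \<beta>"
proof -
  define ls where "ls = rev (sort (map f [0..<n]))"
  have sl: "sorted_wrt (\<ge>) ls" unfolding ls_def by (simp add: sorted_wrt_rev)
  have ml: "mset ls = mset (map f [0..<n])" unfolding ls_def by simp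
  have "(\<Prod>p\<leftarrow>[0..<n]. [:-f p, 1:]) = (\<Prod>x\<leftarrow>map f [0..<n]. [:-x, 1:])" by (simp only: map_map comp_def)
  also have "\<dots> = (\<Prod>x\<leftarrow>ls. [:-x, 1:])" by (rule prod_list_lin_perm[OF ml[symmetric]])
  finally have "char_poly X = (\<Prod>x\<leftarrow>ls. [:-x, 1:])" unfolding cp .
  hence e: "eigs_desc X = ls" using eigs_desc_eq sl by blast
  have len: "length ls = n" unfolding ls_def by simp
  then obtain a b rest where ls: "ls = a # b # rest" using n
    by (cases ls rule: remdups_adj.cases) auto
  have setl: "set ls = f ` {0..<n}" unfolding ls_def by simp
  have "a \<in> f ` {0..<n}" using setl ls by auto
  then obtain p where p: "p < n" "a = f p" by auto
  have "f p \<le> f p0" using bnd[OF p(1)] top by (cases "p = p0") auto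
  moreover have "f p0 \<le> a" using sl setl p0 unfolding ls by auto
  ultimately have a: "a = f p0" using p by simp
  have "mset (b # rest) = mset ls - {#f p0#}" unfolding ls a by simp
  also have "\<dots> = mset (map f (remove1 p0 [0..<n]))" using p0 unfolding ml by (simp add: mset_remove1 image_mset_Diff)
  finally have "b \<in> set (map f (remove1 p0 [0..<n]))" by (metis list.set_intros(1) set_mset_mset)
  then obtain q where q: "q \<in> set (remove1 p0 [0..<n])" "b = f q" by (metis imageE set_map)
  have "q < n" "q \<noteq> p0" using q(1) by (auto simp: set_remove1_eq)
  moreover have "eigs_desc X ! 0 = f p0" using e ls a by simp
  moreover have "eigs_desc X ! 1 = f q" using e ls q(2) by simp
  ultimately show ?thesis using pos[of q] bnd[of q] by simp
qed

definition dig :: "nat \<Rightarrow> nat \<Rightarrow> nat \<Rightarrow> nat" where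
  "dig D p i = p div D ^ i mod D"

lemma dig_0: "dig D p 0 = p mod D" by (simp add: dig_def)
lemma dig_Suc: "dig D p (Suc i) = dig D (p div D) i"
  by (simp add: dig_def div_mult2_eq mult.commute)
lemma dig_less: "0 < D \<Longrightarrow> dig D p i < D" by (simp add: dig_def)

lemma sum_blocks: fixes g :: "nat \<Rightarrow> 'a::comm_monoid_add" and m D :: nat shows "sum g {..<m * D} = (\<Sum>a<m. \<Sum>b<D. g (b + a * D))"
proof -
  have "sum g {..<m * D} = (\<Sum>a<m. sum g {a * D..<a * D + D})" using sum.nat_group[of g D m] by simp
  also have "\<dots> = (\<Sum>a<m. \<Sum>b<D. g (b + a * D))"
  proof (rule sum.cong[OF refl])
    fix a
    have "sum g {0 + a * D..<D + a * D} = (\<Sum>b = 0..<D. g (b + a * D))" by (rule sum.shift_bounds_nat_ivl)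
    thus "sum g {a * D..<a * D + D} = (\<Sum>b<D. g (b + a * D))" by (simp add: add.commute atLeast0LessThan)
  qed
  finally show ?thesis .
qed

lemma prod_blocks: fixes g :: "nat \<Rightarrow> 'a::comm_monoid_mult" and m D :: nat shows "prod g {..<m * D} = (\<Prod>a<m. \<Prod>b<D. g (b + a * D))"
proof -
  have "prod g {..<m * D} = (\<Prod>a<m. prod g {a * D..<a * D + D})" using prod.nat_group[of g D m] by simp
  also have "\<dots> = (\<Prod>a<m. \<Prod>b<D. g (b + a * D))"
  proof (rule prod.cong[OF refl])
    fix a
    have "prod g {0 + a * D..<D + a * D} = (\<Prod>b = 0..<D. g (b + a * D))" by (rule prod.shift_bounds_nat_ivl)
    thus "prod g {a * D..<a * D + D} = (\<Prod>b<D. g (b + a * D))" by (simp add: add.commute atLeast0LessThan)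
  qed
  finally show ?thesis .
qed

lemma dig_block_0: "b < D \<Longrightarrow> dig D (b + a * D) 0 = b" by (simp add: dig_0)
lemma dig_block_Suc: "b < D \<Longrightarrow> dig D (b + a * D) (Suc i) = dig D a i"
  by (simp add: dig_Suc)

lemma sum_prod_dig:
  fixes g :: "nat \<Rightarrow> nat \<Rightarrow> 'a :: comm_semiring_1"
  shows "(\<Sum>p<D ^ k. \<Prod>i<k. g i (dig D p i)) = (\<Prod>i<k. \<Sum>j<D. g i j)"
proof (induction k arbitrary: g)
  case 0
  then show ?case by simp
next
  case (Suc k)
  have "(\<Sum>p<D ^ Suc k. \<Prod>i<Suc k. g i (dig D p i))
      = (\<Sum>a<D ^ k. \<Sum>b<D. \<Prod>i<Suc k. g i (dig D (b + a * D) i))"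
    unfolding power_Suc2 by (rule sum_blocks)
  also have "\<dots> = (\<Sum>a<D ^ k. \<Sum>b<D. g 0 b * (\<Prod>i<k. g (Suc i) (dig D a i)))"
    by (intro sum.cong refl, unfold prod.lessThan_Suc_shift, simp add: dig_block_0 dig_block_Suc)
  also have "\<dots> = (\<Sum>a<D ^ k. (\<Sum>b<D. g 0 b) * (\<Prod>i<k. g (Suc i) (dig D a i)))"
    by (simp add: sum_distrib_right)
  also have "\<dots> = (\<Sum>b<D. g 0 b) * (\<Sum>a<D ^ k. \<Prod>i<k. g (Suc i) (dig D a i))"
    by (simp add: sum_distrib_left)
  also have "\<dots> = (\<Sum>b<D. g 0 b) * (\<Prod>i<k. \<Sum>j<D. g (Suc i) j)"
    using Suc.IH[of "\<lambda>i. g (Suc i)"] by simp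
  also have "\<dots> = (\<Prod>i<Suc k. \<Sum>j<D. g i j)" by (simp only: prod.lessThan_Suc_shift)
  finally show ?case .
qed

lemma prod_prod_dig_one:
  fixes g :: "nat \<Rightarrow> nat \<Rightarrow> 'a :: comm_semiring_1"
  assumes "\<And>i. i < k \<Longrightarrow> (\<Prod>j<D. g i j) = 1"
  shows "(\<Prod>p<D ^ k. \<Prod>i<k. g i (dig D p i)) = 1"
  using assms
proof (induction k arbitrary: g)
  case 0
  then show ?case by simp
next
  case (Suc k)
  have "(\<Prod>p<D ^ Suc k. \<Prod>i<Suc k. g i (dig D p i))
      = (\<Prod>a<D ^ k. \<Prod>b<D. \<Prod>i<Suc k. g i (dig D (b + a * D) i))"
    unfolding power_Suc2 by (rule prod_blocks)
  also have "\<dots> = (\<Prod>a<D ^ k. \<Prod>b<D. g 0 b * (\<Prod>i<k. g (Suc i) (dig D a i)))"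
    by (intro prod.cong refl, unfold prod.lessThan_Suc_shift, simp add: dig_block_0 dig_block_Suc)
  also have "\<dots> = (\<Prod>a<D ^ k. (\<Prod>b<D. g 0 b) * (\<Prod>i<k. g (Suc i) (dig D a i)) ^ D)"
    by (simp add: prod.distrib)
  also have "\<dots> = (\<Prod>a<D ^ k. (\<Prod>i<k. g (Suc i) (dig D a i))) ^ D"
    using Suc.prems[of 0] by (simp add: prod_power_distrib)
  also have "(\<Prod>a<D ^ k. (\<Prod>i<k. g (Suc i) (dig D a i))) = 1"
    by (rule Suc.IH, rule Suc.prems, simp)
  finally show ?case by simp
qed

lemma dig_mono:
  assumes "0 < D" "p < D ^ k" "q < D ^ k" "\<And>i. i < k \<Longrightarrow> dig D p i \<le> dig D q i"
  shows "p \<le> q"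
  using assms(2-)
proof (induction k arbitrary: p q)
  case 0
  then show ?case by simp
next
  case (Suc k)
  have pk: "p div D < D ^ k" using Suc.prems(1) assms(1) by (simp add: div_less_iff_less_mult mult.commute)
  have qk: "q div D < D ^ k" using Suc.prems(2) assms(1) by (simp add: div_less_iff_less_mult mult.commute)
  have "p div D \<le> q div D"
    by (rule Suc.IH[OF pk qk], insert Suc.prems(3), auto simp: dig_Suc[symmetric])
  moreover have "p mod D \<le> q mod D" using Suc.prems(3)[of 0] by (simp add: dig_0)
  ultimately show ?case
  proof (cases "p div D = q div D")
    case True
    then show ?thesis using \<open>p mod D \<le> q mod D\<close> by (metis div_mult_mod_eq add_le_cancel_left)
  next
    case False
    hence "p div D + 1 \<le> q div D" using \<open>p div D \<le> q div D\<close> by simp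
    hence "D * (p div D + 1) \<le> D * (q div D)" by (rule mult_le_mono2)
    moreover have "p < D * (p div D + 1)" using assms(1)
      by (metis add.commute div_mult_mod_eq mod_less_divisor mult.commute nat_add_left_cancel_less distrib_left mult_1_right)
    moreover have "D * (q div D) \<le> q" by (metis div_mult_mod_eq le_add1 mult.commute)
    ultimately show ?thesis by linarith
  qed
qed

lemma dig_inj:
  assumes "0 < D" "p < D ^ k" "q < D ^ k" "\<And>i. i < k \<Longrightarrow> dig D p i = dig D q i"
  shows "p = q"
  using dig_mono[OF assms(1,2,3)] dig_mono[OF assms(1,3,2)] assms(4) by (metis order.eq_iff order_refl)

lemma dig_surj:
  assumes "0 < D" "\<And>i. i < k \<Longrightarrow> y i < D"
  shows "\<exists>p < D ^ k. \<forall>i<k. dig D p i = y i"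
  using assms(2)
proof (induction k arbitrary: y)
  case 0
  then show ?case by simp
next
  case (Suc k)
  obtain p' where p': "p' < D ^ k" "\<forall>i<k. dig D p' i = y (Suc i)"
    using Suc.IH[of "\<lambda>i. y (Suc i)"] Suc.prems by auto
  define p where "p = y 0 + p' * D"
  have y0: "y 0 < D" using Suc.prems by simp
  have "p < D ^ Suc k"
  proof -
    have "p' * D + D \<le> D ^ k * D" using p'(1) by (metis Suc_leI mult_Suc mult_le_mono1 add.commute)
    thus ?thesis unfolding p_def power_Suc2 using y0 by linarith
  qed
  moreover have "\<forall>i<Suc k. dig D p i = y i"
  proof (intro allI impI)
    fix i assume "i < Suc k"
    thus "dig D p i = y i" unfolding p_def using y0 p'(2)
      by (cases i) (auto simp: dig_block_0 dig_block_Suc)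
  qed
  ultimately show ?case by blast
qed

definition KP :: "nat \<Rightarrow> nat \<Rightarrow> (nat \<Rightarrow> nat) \<Rightarrow> (nat \<Rightarrow> real mat) \<Rightarrow> real mat" where
  "KP D k \<sigma> F = mat (D ^ k) (D ^ k) (\<lambda>(p, q). \<Prod>i<k. F i $$ (dig D p (\<sigma> i), dig D q i))"

lemma KP_carrier[simp]: "KP D k \<sigma> F \<in> carrier_mat (D ^ k) (D ^ k)"
  unfolding KP_def by simp

lemma KP_dims[simp]: "dim_row (KP D k \<sigma> F) = D ^ k" "dim_col (KP D k \<sigma> F) = D ^ k"
  unfolding KP_def by simp_all

lemma KP_index: "p < D ^ k \<Longrightarrow> q < D ^ k \<Longrightarrow>
  KP D k \<sigma> F $$ (p, q) = (\<Prod>i<k. F i $$ (dig D p (\<sigma> i), dig D q i))"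
  unfolding KP_def by simp

lemma KP_cong:
  assumes "\<And>i. i < k \<Longrightarrow> \<sigma> i = \<sigma>' i" "\<And>i. i < k \<Longrightarrow> F i = F' i"
  shows "KP D k \<sigma> F = KP D k \<sigma>' F'"
  unfolding KP_def using assms by (intro cong_mat refl) (auto intro!: prod.cong)

lemma mult_index_sum:
  assumes "A \<in> carrier_mat n m" "B \<in> carrier_mat m l" "p < n" "q < l"
  shows "(A * B) $$ (p, q) = (\<Sum>z<m. A $$ (p, z) * B $$ (z, q))"
  using assms by (simp add: scalar_prod_def atLeast0LessThan)

lemma KP_mult:
  assumes D: "0 < D"
    and F: "\<And>i. i < k \<Longrightarrow> F i \<in> carrier_mat D D"
    and G: "\<And>i. i < k \<Longrightarrow> G i \<in> carrier_mat D D"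
    and \<tau>: "bij_betw \<tau> {..<k} {..<k}"
  shows "KP D k \<sigma> F * KP D k \<tau> G = KP D k (\<sigma> \<circ> \<tau>) (\<lambda>i. F (\<tau> i) * G i)"
proof (rule eq_matI)
  fix p q assume "p < dim_row (KP D k (\<sigma> \<circ> \<tau>) (\<lambda>i. F (\<tau> i) * G i))"
    "q < dim_col (KP D k (\<sigma> \<circ> \<tau>) (\<lambda>i. F (\<tau> i) * G i))"
  hence p: "p < D ^ k" and q: "q < D ^ k" by auto
  define \<tau>' where "\<tau>' = the_inv_into {..<k} \<tau>"
  have \<tau>'b: "bij_betw \<tau>' {..<k} {..<k}" unfolding \<tau>'_def by (rule bij_betw_the_inv_into[OF \<tau>])
  have tt': "\<tau> (\<tau>' i) = i" if "i < k" for i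
    unfolding \<tau>'_def using f_the_inv_into_f_bij_betw[OF \<tau>] that by auto
  have t't: "\<tau>' (\<tau> i) = i" if "i < k" for i
    unfolding \<tau>'_def using the_inv_into_f_f[OF bij_betw_imp_inj_on[OF \<tau>]] that by auto
  have t'k: "\<tau>' i < k" if "i < k" for i using \<tau>'b that by (auto simp: bij_betw_def)
  have tk: "\<tau> i < k" if "i < k" for i using \<tau> that by (auto simp: bij_betw_def)
  have "(KP D k \<sigma> F * KP D k \<tau> G) $$ (p, q) = (\<Sum>z<D ^ k. KP D k \<sigma> F $$ (p, z) * KP D k \<tau> G $$ (z, q))"
    by (rule mult_index_sum[OF KP_carrier KP_carrier p q])
  also have "\<dots> = (\<Sum>z<D ^ k. \<Prod>i<k. F i $$ (dig D p (\<sigma> i), dig D z i) * G (\<tau>' i) $$ (dig D z i, dig D q (\<tau>' i)))"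
  proof (rule sum.cong[OF refl])
    fix z assume "z \<in> {..<D ^ k}"
    hence z: "z < D ^ k" by simp
    have "(\<Prod>i<k. G i $$ (dig D z (\<tau> i), dig D q i)) = (\<Prod>i<k. G (\<tau>' i) $$ (dig D z (\<tau> (\<tau>' i)), dig D q (\<tau>' i)))"
      by (rule prod.reindex_bij_betw[OF \<tau>'b, symmetric])
    also have "\<dots> = (\<Prod>i<k. G (\<tau>' i) $$ (dig D z i, dig D q (\<tau>' i)))"
      by (rule prod.cong, simp, simp add: tt')
    finally have "(\<Prod>i<k. G i $$ (dig D z (\<tau> i), dig D q i)) = (\<Prod>i<k. G (\<tau>' i) $$ (dig D z i, dig D q (\<tau>' i)))" .
    thus "KP D k \<sigma> F $$ (p, z) * KP D k \<tau> G $$ (z, q) =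
      (\<Prod>i<k. F i $$ (dig D p (\<sigma> i), dig D z i) * G (\<tau>' i) $$ (dig D z i, dig D q (\<tau>' i)))"
      by (simp add: KP_index p q z prod.distrib)
  qed
  also have "\<dots> = (\<Prod>i<k. \<Sum>j<D. F i $$ (dig D p (\<sigma> i), j) * G (\<tau>' i) $$ (j, dig D q (\<tau>' i)))"
    by (rule sum_prod_dig)
  also have "\<dots> = (\<Prod>i<k. (F i * G (\<tau>' i)) $$ (dig D p (\<sigma> i), dig D q (\<tau>' i)))"
    by (rule prod.cong[OF refl], rule mult_index_sum[symmetric],
        auto intro: F G t'k simp: dig_less[OF D])
  also have "\<dots> = (\<Prod>i<k. (F (\<tau> i) * G (\<tau>' (\<tau> i))) $$ (dig D p (\<sigma> (\<tau> i)), dig D q (\<tau>' (\<tau> i))))"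
    by (rule prod.reindex_bij_betw[OF \<tau>, symmetric])
  also have "\<dots> = (\<Prod>i<k. (F (\<tau> i) * G i) $$ (dig D p ((\<sigma> \<circ> \<tau>) i), dig D q i))"
    by (rule prod.cong, simp, simp add: t't)
  also have "\<dots> = KP D k (\<sigma> \<circ> \<tau>) (\<lambda>i. F (\<tau> i) * G i) $$ (p, q)"
    by (simp add: KP_index p q)
  finally show "(KP D k \<sigma> F * KP D k \<tau> G) $$ (p, q) = KP D k (\<sigma> \<circ> \<tau>) (\<lambda>i. F (\<tau> i) * G i) $$ (p, q)" .
qed auto

lemma KP_transpose:
  assumes D: "0 < D"
    and F: "\<And>i. i < k \<Longrightarrow> F i \<in> carrier_mat D D"
    and \<sigma>: "bij_betw \<sigma> {..<k} {..<k}"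
  shows "transpose_mat (KP D k \<sigma> F) = KP D k (the_inv_into {..<k} \<sigma>) (\<lambda>i. transpose_mat (F (the_inv_into {..<k} \<sigma> i)))"
proof (rule eq_matI)
  define \<sigma>' where "\<sigma>' = the_inv_into {..<k} \<sigma>"
  fix p q assume "p < dim_row (KP D k (the_inv_into {..<k} \<sigma>) (\<lambda>i. transpose_mat (F (the_inv_into {..<k} \<sigma> i))))"
    "q < dim_col (KP D k (the_inv_into {..<k} \<sigma>) (\<lambda>i. transpose_mat (F (the_inv_into {..<k} \<sigma> i))))"
  hence p: "p < D ^ k" and q: "q < D ^ k" by auto
  have \<sigma>'b: "bij_betw \<sigma>' {..<k} {..<k}" unfolding \<sigma>'_def by (rule bij_betw_the_inv_into[OF \<sigma>])
  have ss': "\<sigma> (\<sigma>' i) = i" if "i < k" for i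
    unfolding \<sigma>'_def using f_the_inv_into_f_bij_betw[OF \<sigma>] that by auto
  have s'k: "\<sigma>' i < k" if "i < k" for i using \<sigma>'b that by (auto simp: bij_betw_def)
  have "transpose_mat (KP D k \<sigma> F) $$ (p, q) = (\<Prod>i<k. F i $$ (dig D q (\<sigma> i), dig D p i))"
    using p q by (simp add: KP_index)
  also have "\<dots> = (\<Prod>i<k. F (\<sigma>' i) $$ (dig D q (\<sigma> (\<sigma>' i)), dig D p (\<sigma>' i)))"
    by (rule prod.reindex_bij_betw[OF \<sigma>'b, symmetric])
  also have "\<dots> = (\<Prod>i<k. transpose_mat (F (\<sigma>' i)) $$ (dig D p (\<sigma>' i), dig D q i))"
  proof (rule prod.cong[OF refl])
    fix x assume "x \<in> {..<k}"
    hence x: "x < k" by simp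
    have c: "F (\<sigma>' x) \<in> carrier_mat D D" using F s'k x by blast
    show "F (\<sigma>' x) $$ (dig D q (\<sigma> (\<sigma>' x)), dig D p (\<sigma>' x)) = transpose_mat (F (\<sigma>' x)) $$ (dig D p (\<sigma>' x), dig D q x)"
      using c x by (simp add: ss' dig_less[OF D])
  qed
  also have "\<dots> = KP D k \<sigma>' (\<lambda>i. transpose_mat (F (\<sigma>' i))) $$ (p, q)"
    by (simp add: KP_index p q)
  finally show "transpose_mat (KP D k \<sigma> F) $$ (p, q) =
    KP D k (the_inv_into {..<k} \<sigma>) (\<lambda>i. transpose_mat (F (the_inv_into {..<k} \<sigma> i))) $$ (p, q)"
    unfolding \<sigma>'_def .
qed auto

lemma KP_one:
  assumes D: "0 < D" and \<sigma>: "\<And>i. i < k \<Longrightarrow> \<sigma> i = i"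
    and F: "\<And>i. i < k \<Longrightarrow> F i = 1\<^sub>m D"
  shows "KP D k \<sigma> F = 1\<^sub>m (D ^ k)"
proof (rule eq_matI)
  fix p q assume "p < dim_row (1\<^sub>m (D ^ k))" "q < dim_col (1\<^sub>m (D ^ k) :: real mat)"
  hence p: "p < D ^ k" and q: "q < D ^ k" by auto
  have "KP D k \<sigma> F $$ (p, q) = (\<Prod>i<k. (if dig D p i = dig D q i then 1 else 0))"
    using p q by (simp add: KP_index \<sigma> F dig_less[OF D])
  also have "\<dots> = (if p = q then 1 else 0)"
  proof (cases "p = q")
    case False
    then obtain i where i: "i < k" "dig D p i \<noteq> dig D q i" using dig_inj[OF D p q] by blast
    have "(\<Prod>i<k. (if dig D p i = dig D q i then 1 else 0)) = (0::real)"
      by (rule prod_zero, simp, rule bexI[of _ i], insert i, auto)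
    then show ?thesis using False by simp
  qed simp
  finally show "KP D k \<sigma> F $$ (p, q) = 1\<^sub>m (D ^ k) $$ (p, q)" using p q by simp
qed auto

lemma KP_upper:
  assumes D: "0 < D" and \<sigma>: "\<And>i. i < k \<Longrightarrow> \<sigma> i = i"
    and F: "\<And>i. i < k \<Longrightarrow> F i \<in> carrier_mat D D" and U: "\<And>i. i < k \<Longrightarrow> upper_triangular (F i)"
  shows "upper_triangular (KP D k \<sigma> F)"
proof (rule upper_triangularI)
  fix p q assume qp: "q < p" and "p < dim_row (KP D k \<sigma> F)"
  hence p: "p < D ^ k" by simp
  hence q: "q < D ^ k" using qp by simp
  have "\<not> (\<forall>i<k. dig D p i \<le> dig D q i)" using dig_mono[OF D p q] qp by auto
  then obtain i where i: "i < k" "dig D q i < dig D p i" by auto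
  have "F i $$ (dig D p i, dig D q i) = 0"
    using upper_triangularD[OF U[OF i(1)] i(2)] F[OF i(1)] dig_less[OF D] by auto
  hence "(\<Prod>i<k. F i $$ (dig D p (\<sigma> i), dig D q i)) = 0"
    by (intro prod_zero, simp, intro bexI[of _ i], insert i \<sigma>[OF i(1)], auto)
  thus "KP D k \<sigma> F $$ (p, q) = 0" using p q by (simp add: KP_index)
qed

lemma KP_diag:
  assumes "\<And>i. i < k \<Longrightarrow> \<sigma> i = i" "p < D ^ k"
  shows "KP D k \<sigma> F $$ (p, p) = (\<Prod>i<k. F i $$ (dig D p i, dig D p i))"
  using assms by (simp add: KP_index)

definition ext :: "nat \<Rightarrow> real mat \<Rightarrow> real \<Rightarrow> real mat" where
  "ext n A e = mat (Suc n) (Suc n) (\<lambda>(a, b). if a < n \<and> b < n then A $$ (a, b) else if a = b then e else 0)"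

lemma ext_carrier[simp]: "ext n A e \<in> carrier_mat (Suc n) (Suc n)"
  unfolding ext_def by simp

lemma ext_dims[simp]: "dim_row (ext n A e) = Suc n" "dim_col (ext n A e) = Suc n"
  unfolding ext_def by simp_all

lemma ext_index: "a < Suc n \<Longrightarrow> b < Suc n \<Longrightarrow>
  ext n A e $$ (a, b) = (if a < n \<and> b < n then A $$ (a, b) else if a = b then e else 0)"
  unfolding ext_def by simp

lemma ext_mult:
  assumes A: "A \<in> carrier_mat n n" and B: "B \<in> carrier_mat n n"
  shows "ext n A e * ext n B e' = ext n (A * B) (e * e')"
proof (rule eq_matI)
  fix a b assume "a < dim_row (ext n (A * B) (e * e'))" "b < dim_col (ext n (A * B) (e * e'))"
  hence a: "a < Suc n" and b: "b < Suc n" by auto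
  have "(ext n A e * ext n B e') $$ (a, b) = (\<Sum>z<Suc n. ext n A e $$ (a, z) * ext n B e' $$ (z, b))"
    by (rule mult_index_sum[OF ext_carrier ext_carrier a b])
  also have "\<dots> = (\<Sum>z<n. ext n A e $$ (a, z) * ext n B e' $$ (z, b)) + ext n A e $$ (a, n) * ext n B e' $$ (n, b)"
    by simp
  also have "\<dots> = ext n (A * B) (e * e') $$ (a, b)"
  proof (cases "a < n")
    case True note a' = this
    show ?thesis
    proof (cases "b < n")
      case True
      have "(\<Sum>z<n. ext n A e $$ (a, z) * ext n B e' $$ (z, b)) = (\<Sum>z<n. A $$ (a, z) * B $$ (z, b))"
        by (rule sum.cong, simp, auto simp: ext_index a b a' True)
      also have "\<dots> = (A * B) $$ (a, b)" by (rule mult_index_sum[OF A B a' True, symmetric])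
      finally show ?thesis using a' True by (simp add: ext_index)
    next
      case False
      hence bn: "b = n" using b by simp
      have "(\<Sum>z<n. ext n A e $$ (a, z) * ext n B e' $$ (z, b)) = 0"
        by (rule sum.neutral, simp add: ext_index bn)
      thus ?thesis using a' bn by (simp add: ext_index)
    qed
  next
    case False
    hence an: "a = n" using a by simp
    have "(\<Sum>z<n. ext n A e $$ (a, z) * ext n B e' $$ (z, b)) = 0"
      by (rule sum.neutral, simp add: ext_index an)
    thus ?thesis using an b by (simp add: ext_index)
  qed
  finally show "(ext n A e * ext n B e') $$ (a, b) = ext n (A * B) (e * e') $$ (a, b)" .
qed auto

lemma ext_transpose:
  assumes A: "A \<in> carrier_mat n n"
  shows "transpose_mat (ext n A e) = ext n (transpose_mat A) e"
  by (rule eq_matI, insert A, auto simp: ext_index)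

lemma ext_one: "ext n (1\<^sub>m n) 1 = 1\<^sub>m (Suc n)"
  by (rule eq_matI, auto simp: ext_index)

lemma ext_upper:
  assumes A: "A \<in> carrier_mat n n" and U: "upper_triangular A"
  shows "upper_triangular (ext n A e)"
  by (rule upper_triangularI, insert A U, auto simp: ext_index dest: upper_triangularD)

lemma ext_det:
  assumes A: "A \<in> carrier_mat n n"
  shows "det (ext n A e) = det A * e"
proof -
  have "ext n A e = four_block_mat A (0\<^sub>m n 1) (0\<^sub>m 1 n) (mat 1 1 (\<lambda>_. e))"
    by (rule eq_matI, insert A, auto simp: ext_index)
  also have "det \<dots> = det A * det (mat 1 1 (\<lambda>_. e))"
    by (rule det_four_block_mat_upper_right_zero[OF A refl], auto)
  also have "det (mat 1 1 (\<lambda>_. e)) = e"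
    by (subst det_upper_triangular[of _ 1], auto simp: diag_mat_def)
  finally show ?thesis .
qed

lemma ext_similar:
  assumes "similar_mat_wit A T P Q" "A \<in> carrier_mat n n"
  shows "similar_mat_wit (ext n A e) (ext n T e) (ext n P 1) (ext n Q 1)"
proof -
  from assms have c: "T \<in> carrier_mat n n" "P \<in> carrier_mat n n" "Q \<in> carrier_mat n n"
    and PQ: "P * Q = 1\<^sub>m n" "Q * P = 1\<^sub>m n" and AT: "A = P * T * Q"
    unfolding similar_mat_wit_def Let_def by auto
  have "ext n P 1 * ext n Q 1 = 1\<^sub>m (Suc n)" using c by (simp add: ext_mult PQ ext_one)
  moreover have "ext n Q 1 * ext n P 1 = 1\<^sub>m (Suc n)" using c by (simp add: ext_mult PQ ext_one)
  moreover have "ext n A e = ext n P 1 * ext n T e * ext n Q 1"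
    using c by (simp add: ext_mult AT)
  ultimately show ?thesis unfolding similar_mat_wit_def Let_def by auto
qed

lemma prod_list_nth: "prod_list (xs :: real list) = (\<Prod>i<length xs. xs ! i)"
proof -
  have "(\<Prod>i<length xs. xs ! i) = (\<Prod>i\<in>set [0..<length xs]. xs ! i)" by (simp add: atLeast0LessThan)
  also have "\<dots> = prod_list (map (\<lambda>i. xs ! i) [0..<length xs])" by (rule prod.distinct_set_conv_list) simp
  also have "\<dots> = prod_list xs" by (simp add: map_nth)
  finally show ?thesis by simp
qed

lemma prod_list_le_1:
  assumes "\<forall>x\<in>set xs. 0 < x \<and> x \<le> (1::real)"
  shows "0 < prod_list xs \<and> prod_list xs \<le> 1"
  using assms
proof (induction xs)
  case (Cons a xs)
  hence "0 < prod_list xs" "prod_list xs \<le> 1" "0 < a" "a \<le> 1" by auto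
  thus ?case by (simp add: mult_le_one)
qed simp

lemma factor_bounds:
  fixes es :: "real list"
  assumes srt: "sorted_wrt (\<ge>) es" and pos: "\<forall>x\<in>set es. x > 0" and len: "length es = d"
    and d: "2 \<le> d" and pr: "prod_list es = 1"
  defines "g \<equiv> ln (sqrt (es ! 0)) - ln (sqrt (es ! 1))"
    and "\<mu> \<equiv> \<lambda>j. if j < d then es ! j else 1"
  shows "0 \<le> g" "exp g \<le> \<mu> 0" "\<And>j. j < Suc d \<Longrightarrow> j \<noteq> 0 \<Longrightarrow> \<mu> j \<le> \<mu> 0 * exp (- g)"
    "\<And>j. 0 < \<mu> j" "(\<Prod>j<Suc d. \<mu> j) = 1" "1 \<le> \<mu> 0"
proof -
  obtain a b rest where es: "es = a # b # rest" using len d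
    by (cases es rule: remdups_adj.cases) auto
  have a: "0 < a" and b: "0 < b" using pos es by auto
  have ab: "b \<le> a" using srt es by simp
  have rb: "\<forall>x\<in>set rest. x \<le> b" using srt es by simp
  have rp: "\<forall>x\<in>set rest. 0 < x" using pos es by simp
  have g: "g = (ln a - ln b) / 2" unfolding g_def es using a b by (simp add: ln_sqrt)
  have lab: "ln b \<le> ln a" using a b ab by simp
  show g0: "0 \<le> g" using g lab by simp
  have ab1: "1 \<le> a * b"
  proof (cases "1 \<le> b")
    case True
    have "1 * 1 \<le> a * b" by (rule mult_mono, insert True ab, auto)
    then show ?thesis by simp
  next
    case False
    have "\<forall>x\<in>set rest. 0 < x \<and> x \<le> 1" using rb rp False by force
    hence P: "0 < prod_list rest" "prod_list rest \<le> 1" using prod_list_le_1 by blast+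
    have e: "a * b * prod_list rest = 1" using pr es by (simp add: mult.assoc)
    have Pn: "prod_list rest \<noteq> 0" using P(1) by linarith
    have "a * b = 1 / prod_list rest" using nonzero_eq_divide_eq[OF Pn, of "a * b" 1] e by blast
    moreover have "1 \<le> 1 / prod_list rest" using P by (simp add: le_divide_eq)
    ultimately show ?thesis by simp
  qed
  have "ln (a * b) = ln a + ln b" using a b by (rule ln_mult_pos)
  moreover have "0 \<le> ln (a * b)" using ab1 by simp
  ultimately have "0 \<le> ln a + ln b" by simp
  hence gla: "g \<le> ln a" using g by simp
  have mu0: "\<mu> 0 = a" unfolding \<mu>_def using d es by simp
  have "exp g \<le> exp (ln a)" using gla by (simp only: exp_le_cancel_iff)
  hence ega: "exp g \<le> a" using a by simp
  show "exp g \<le> \<mu> 0" unfolding mu0 by (rule ega)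
  have "1 \<le> exp g" using g0 by simp
  thus "1 \<le> \<mu> 0" unfolding mu0 using ega by linarith
  have eb: "b \<le> a * exp (- g)"
  proof -
    have "ln b \<le> ln a - g" using g lab by simp
    hence "exp (ln b) \<le> exp (ln a - g)" by simp
    thus ?thesis using a b by (simp add: exp_diff exp_minus divide_inverse)
  qed
  have e1: "1 \<le> a * exp (- g)"
  proof -
    have "0 \<le> ln a - g" using gla by simp
    hence "exp 0 \<le> exp (ln a - g)" by (simp only: exp_le_cancel_iff)
    thus ?thesis using a by (simp add: exp_diff exp_minus divide_inverse le_divide_eq)
  qed
  show "\<mu> j \<le> \<mu> 0 * exp (- g)" if "j < Suc d" "j \<noteq> 0" for j
  proof (cases "j < d")
    case True
    have "es ! j \<le> es ! 1"
    proof (cases "j = 1")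
      case False
      hence "1 < j" using that by simp
      thus ?thesis using sorted_wrt_nth_less[OF srt, of 1 j] True len by simp
    qed simp
    thus ?thesis unfolding mu0 using True eb es unfolding \<mu>_def by simp
  next
    case False
    thus ?thesis unfolding mu0 using e1 unfolding \<mu>_def by simp
  qed
  show "0 < \<mu> j" for j unfolding \<mu>_def using pos len by (auto simp: nth_mem)
  have "(\<Prod>j<Suc d. \<mu> j) = (\<Prod>j<d. es ! j)" unfolding \<mu>_def by simp
  also have "\<dots> = 1" using pr len by (simp add: prod_list_nth)
  finally show "(\<Prod>j<Suc d. \<mu> j) = 1" .
qed

lemma word_eval_Nil[simp]: "word_eval G [] = \<one>\<^bsub>G\<^esub>" by (simp add: word_eval_def)
lemma word_eval_Cons[simp]: "word_eval G ((s, b) # w) = (if b then s else inv\<^bsub>G\<^esub> s) \<otimes>\<^bsub>G\<^esub> word_eval G w"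
  by (simp add: word_eval_def)

lemma word_eval_closed:
  assumes "group G" "fst ` set w \<subseteq> carrier G"
  shows "word_eval G w \<in> carrier G"
  using assms(2)
proof (induction w)
  case Nil then show ?case using assms(1) by (simp add: group.is_monoid monoid.one_closed)
next
  case (Cons x w) then show ?case using assms(1)
    by (cases x) (auto simp: group.inv_closed monoid.m_closed group.is_monoid)
qed

lemma word_eval_append:
  assumes G: "group G" and "fst ` set w1 \<subseteq> carrier G" "fst ` set w2 \<subseteq> carrier G"
  shows "word_eval G (w1 @ w2) = word_eval G w1 \<otimes>\<^bsub>G\<^esub> word_eval G w2"
  using assms(2)
proof (induction w1)
  case Nil then show ?case using G word_eval_closed[OF G assms(3)]
    by (simp add: group.is_monoid monoid.l_one)
next
  case (Cons x w)
  obtain s b where x: "x = (s, b)" by (cases x)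
  have s: "s \<in> carrier G" using Cons.prems x by auto
  have c: "(if b then s else inv\<^bsub>G\<^esub> s) \<in> carrier G" using s G by (simp add: group.inv_closed)
  have "word_eval G ((x # w) @ w2) = (if b then s else inv\<^bsub>G\<^esub> s) \<otimes>\<^bsub>G\<^esub> (word_eval G w \<otimes>\<^bsub>G\<^esub> word_eval G w2)"
    using Cons x by simp
  also have "\<dots> = ((if b then s else inv\<^bsub>G\<^esub> s) \<otimes>\<^bsub>G\<^esub> word_eval G w) \<otimes>\<^bsub>G\<^esub> word_eval G w2"
    using G c word_eval_closed[OF G assms(3)] word_eval_closed[OF G, of w] Cons.prems
    by (simp add: group.is_monoid monoid.m_assoc)
  finally show ?case using x by simp
qed

lemma word_eval_sub:
  assumes G: "group G" and H: "subgroup H G" and w: "fst ` set w \<subseteq> H"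
  shows "word_eval (G\<lparr>carrier := H\<rparr>) w = word_eval G w"
  using w
proof (induction w)
  case (Cons x w)
  obtain s b where x: "x = (s, b)" by (cases x)
  have s: "s \<in> H" using Cons.prems x by auto
  show ?case using Cons x s group.m_inv_consistent[OF G H s] by simp
qed simp

lemma word_eval_gen:
  assumes G: "group G" and w: "fst ` set w \<subseteq> S"
  shows "word_eval G w \<in> generate G S"
  using w
proof (induction w)
  case Nil then show ?case by (simp add: generate.one)
next
  case (Cons x w)
  obtain s b where x: "x = (s, b)" by (cases x)
  have s: "s \<in> S" using Cons.prems x by auto
  have "(if b then s else inv\<^bsub>G\<^esub> s) \<in> generate G S" using s by (simp add: generate.incl generate.inv)
  thus ?case using Cons x by (simp add: generate.eng)
qed

lemma gen_word:
  assumes G: "group G" and S: "S \<subseteq> carrier G" and x: "x \<in> generate G S"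
  shows "\<exists>w. fst ` set w \<subseteq> S \<and> word_eval G w = x"
  using x
proof (induction rule: generate.induct)
  case one
  then show ?case by (intro exI[of _ "[]"]) simp
next
  case (incl h)
  have "h \<in> carrier G" using incl S by auto
  then show ?case using incl G by (intro exI[of _ "[(h, True)]"]) (simp add: group.is_monoid monoid.r_one)
next
  case (inv h)
  have "h \<in> carrier G" using inv S by auto
  then show ?case using inv G by (intro exI[of _ "[(h, False)]"]) (simp add: group.is_monoid monoid.r_one group.inv_closed)
next
  case (eng h1 h2)
  then obtain w1 w2 where "fst ` set w1 \<subseteq> S" "word_eval G w1 = h1" "fst ` set w2 \<subseteq> S" "word_eval G w2 = h2" by blast
  then show ?case using word_eval_append[OF G, of w1 w2] S by (intro exI[of _ "w1 @ w2"]) auto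
qed

lemma word_length_le:
  assumes "fst ` set w \<subseteq> S" "word_eval G w = x"
  shows "word_length G S x \<le> length w"
  unfolding word_length_def by (rule Least_le, insert assms, auto)

lemma word_length_ex:
  assumes "\<exists>w. fst ` set w \<subseteq> S \<and> word_eval G w = x"
  shows "\<exists>w. length w = word_length G S x \<and> fst ` set w \<subseteq> S \<and> word_eval G w = x"
proof -
  from assms obtain w where "fst ` set w \<subseteq> S \<and> word_eval G w = x" by blast
  hence "\<exists>n ws. length ws = n \<and> fst ` set ws \<subseteq> S \<and> word_eval G ws = x" by blast
  hence "\<exists>ws. length ws = (LEAST n. \<exists>ws. length ws = n \<and> fst ` set ws \<subseteq> S \<and> word_eval G ws = x) \<and> fst ` set ws \<subseteq> S \<and> word_eval G ws = x"
    by (rule LeastI_ex[where P = "\<lambda>n. \<exists>ws. length ws = n \<and> fst ` set ws \<subseteq> S \<and> word_eval G ws = x", OF exE]) auto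
  thus ?thesis unfolding word_length_def .
qed

locale ind = normal H G for H and G (structure) +
  fixes k :: nat and cs :: "nat \<Rightarrow> 'a set" and t :: "nat \<Rightarrow> 'a" and i0 :: nat
  assumes cs_bij: "bij_betw cs {..<k} (rcosets H)"
    and t_in: "\<And>i. i < k \<Longrightarrow> t i \<in> cs i"
    and i0: "i0 < k" "cs i0 = H"
begin

definition \<sigma> :: "'a \<Rightarrow> nat \<Rightarrow> nat" where
  "\<sigma> g i = the_inv_into {..<k} cs (H #> (g \<otimes> t i))"

definition hh :: "'a \<Rightarrow> nat \<Rightarrow> 'a" where
  "hh g i = inv (t (\<sigma> g i)) \<otimes> g \<otimes> t i"

lemma sg: "subgroup H G" by (rule subgroup_axioms)

lemma cs_inj: "inj_on cs {..<k}" using cs_bij by (rule bij_betw_imp_inj_on)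

lemma cs_img: "cs ` {..<k} = rcosets H" using cs_bij by (rule bij_betw_imp_surj_on)

lemma cs_eq: assumes "i < k" shows "cs i = H #> t i" "t i \<in> carrier G"
proof -
  have "cs i \<in> rcosets H" using cs_img assms by auto
  then obtain a where a: "a \<in> carrier G" "cs i = H #> a" unfolding RCOSETS_def by auto
  have ti: "t i \<in> H #> a" using t_in[OF assms] a by simp
  show "cs i = H #> t i" using repr_independence[OF ti a(1) sg] a(2) by simp
  show "t i \<in> carrier G" using ti r_coset_subset_G[OF subset a(1)] by auto
qed

lemma t_carrier[simp]: "i < k \<Longrightarrow> t i \<in> carrier G" using cs_eq by blast

lemma sigma: assumes g: "g \<in> carrier G" and i: "i < k"
  shows "\<sigma> g i < k" "cs (\<sigma> g i) = H #> (g \<otimes> t i)"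
proof -
  have "H #> (g \<otimes> t i) \<in> cs ` {..<k}" unfolding cs_img using g i by (intro rcosetsI subset) auto
  thus "\<sigma> g i < k" "cs (\<sigma> g i) = H #> (g \<otimes> t i)" unfolding \<sigma>_def
    using the_inv_into_into[OF cs_inj] f_the_inv_into_f[OF cs_inj] by auto
qed

lemma sigma_eq: assumes "j < k" "cs j = H #> (g \<otimes> t i)"
  shows "\<sigma> g i = j"
  unfolding \<sigma>_def by (rule the_inv_into_f_eq[OF cs_inj], insert assms, auto)

lemma lcos: assumes g: "g \<in> carrier G" and i: "i < k"
  shows "\<exists>x\<in>H. t (\<sigma> g i) = (g \<otimes> t i) \<otimes> x"
proof -
  have "t (\<sigma> g i) \<in> cs (\<sigma> g i)" using t_in sigma[OF g i] by blast
  also have "\<dots> = (g \<otimes> t i) <# H" using sigma[OF g i] coset_eq g i by simp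
  finally show ?thesis unfolding l_coset_def by blast
qed

lemma hh_H: assumes g: "g \<in> carrier G" and i: "i < k" shows "hh g i \<in> H"
proof -
  obtain x where x: "x \<in> H" "t (\<sigma> g i) = (g \<otimes> t i) \<otimes> x" using lcos[OF g i] by blast
  have xc: "x \<in> carrier G" using x subset by auto
  have gt: "g \<otimes> t i \<in> carrier G" using g i by simp
  have "hh g i = inv ((g \<otimes> t i) \<otimes> x) \<otimes> (g \<otimes> t i)"
    unfolding hh_def x(2) using g i xc by (simp add: m_assoc)
  also have "\<dots> = inv x"
    using gt xc by (simp add: inv_mult_group m_assoc)
  finally show ?thesis using x by simp
qed

lemma hh_carrier[simp]: "g \<in> carrier G \<Longrightarrow> i < k \<Longrightarrow> hh g i \<in> carrier G"
  using hh_H subset by blast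

lemma sigma_one: "i < k \<Longrightarrow> \<sigma> \<one> i = i"
  by (rule sigma_eq) (auto simp: cs_eq)

lemma sigma_mult: assumes g: "g \<in> carrier G" and g': "g' \<in> carrier G" and i: "i < k"
  shows "\<sigma> (g \<otimes> g') i = \<sigma> g (\<sigma> g' i)"
proof -
  let ?j = "\<sigma> g' i"
  have j: "?j < k" using sigma[OF g' i] by simp
  obtain x where x: "x \<in> H" "t ?j = (g' \<otimes> t i) \<otimes> x" using lcos[OF g' i] by blast
  have xc: "x \<in> carrier G" using x subset by auto
  have "g \<otimes> t ?j = (g \<otimes> g' \<otimes> t i) \<otimes> x" using x(2) g g' i xc by (simp add: m_assoc)
  also have "\<dots> \<in> (g \<otimes> g' \<otimes> t i) <# H" using x unfolding l_coset_def by blast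
  also have "\<dots> = H #> (g \<otimes> g' \<otimes> t i)" using coset_eq g g' i by simp
  finally have "H #> (g \<otimes> g' \<otimes> t i) = H #> (g \<otimes> t ?j)"
    by (rule repr_independence, insert g g' i sg, auto)
  hence "cs (\<sigma> g ?j) = H #> ((g \<otimes> g') \<otimes> t i)" using sigma[OF g j] by simp
  thus ?thesis by (intro sigma_eq sigma[OF g j]) 
qed

lemma sigma_bij: assumes g: "g \<in> carrier G" shows "bij_betw (\<sigma> g) {..<k} {..<k}"
proof (rule bij_betw_byWitness[where f' = "\<sigma> (inv g)"])
  show "\<forall>a\<in>{..<k}. \<sigma> (inv g) (\<sigma> g a) = a"
    using g by (auto simp: sigma_mult[symmetric] sigma_one)
  show "\<forall>a\<in>{..<k}. \<sigma> g (\<sigma> (inv g) a) = a"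
    using g by (auto simp: sigma_mult[symmetric] sigma_one)
  show "\<sigma> g ` {..<k} \<subseteq> {..<k}" using sigma[OF g] by auto
  show "\<sigma> (inv g) ` {..<k} \<subseteq> {..<k}" using sigma[of "inv g"] g by auto
qed

lemma mult_inv_cancel: "x \<in> carrier G \<Longrightarrow> y \<in> carrier G \<Longrightarrow> x \<otimes> (inv x \<otimes> y) = y"
  by (simp add: m_assoc[symmetric])

lemma hh_mult: assumes g: "g \<in> carrier G" and g': "g' \<in> carrier G" and i: "i < k"
  shows "hh (g \<otimes> g') i = hh g (\<sigma> g' i) \<otimes> hh g' i"
proof -
  let ?j = "\<sigma> g' i"
  have j: "?j < k" using sigma[OF g' i] by simp
  have a: "\<sigma> g ?j < k" using sigma[OF g j] by simp
  have "hh g ?j \<otimes> hh g' i = inv (t (\<sigma> g ?j)) \<otimes> (g \<otimes> (t ?j \<otimes> (inv (t ?j) \<otimes> (g' \<otimes> t i))))"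
    unfolding hh_def using g g' i j a by (simp add: m_assoc)
  also have "\<dots> = inv (t (\<sigma> g ?j)) \<otimes> (g \<otimes> (g' \<otimes> t i))"
    using g' i j by (simp add: mult_inv_cancel)
  also have "\<dots> = hh (g \<otimes> g') i"
    unfolding hh_def sigma_mult[OF g g' i] using g g' i a by (simp add: m_assoc)
  finally show ?thesis by simp
qed

lemma hh_one: "i < k \<Longrightarrow> hh \<one> i = \<one>"
  unfolding hh_def by (simp add: sigma_one)

lemma decomp: assumes g: "g \<in> carrier G" and i: "i < k"
  shows "t (\<sigma> g i) \<otimes> (hh g i \<otimes> inv (t i)) = g"
proof -
  have a: "\<sigma> g i < k" using sigma[OF g i] by simp
  have "t (\<sigma> g i) \<otimes> (hh g i \<otimes> inv (t i)) = t (\<sigma> g i) \<otimes> (inv (t (\<sigma> g i)) \<otimes> (g \<otimes> (t i \<otimes> inv (t i))))"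
    unfolding hh_def using g i a by (simp add: m_assoc)
  also have "\<dots> = g" using g i a by (simp add: mult_inv_cancel)
  finally show ?thesis .
qed

end

lemma AtA_eigs:
  fixes A :: "real mat"
  assumes A: "A \<in> carrier_mat n n" and dA: "det A = 1"
  defines "es \<equiv> eigs_desc (transpose_mat A * A)"
  shows "sorted_wrt (\<ge>) es" "\<forall>x\<in>set es. x > 0" "length es = n"
    "char_poly (transpose_mat A * A) = (\<Prod>x\<leftarrow>es. [:-x, 1:])" "prod_list es = 1"
proof -
  let ?B = "transpose_mat A * A"
  have B: "?B \<in> carrier_mat n n" using A by auto
  obtain bs where bs: "char_poly ?B = (\<Prod>b\<leftarrow>bs. [:-b, 1:])" "\<forall>b\<in>set bs. b > 0" "length bs = n"
    using AtA_split[OF A] dA by auto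
  define ls where "ls = rev (sort bs)"
  have sl: "sorted_wrt (\<ge>) ls" unfolding ls_def by (simp add: sorted_wrt_rev)
  have ml: "mset ls = mset bs" unfolding ls_def by simp
  have cp: "char_poly ?B = (\<Prod>x\<leftarrow>ls. [:-x, 1:])"
    unfolding bs(1) by (rule prod_list_lin_perm[OF ml[symmetric]])
  have e: "es = ls" unfolding es_def by (rule eigs_desc_eq[OF sl cp])
  show "sorted_wrt (\<ge>) es" using sl e by simp
  show "\<forall>x\<in>set es. x > 0" using bs(2) e unfolding ls_def by simp
  show "length es = n" using bs(3) e unfolding ls_def by simp
  show cpe: "char_poly ?B = (\<Prod>x\<leftarrow>es. [:-x, 1:])" using cp e by simp
  obtain T P Q where sch: "schur_decomposition ?B es = (T, P, Q)" by (cases "schur_decomposition ?B es") auto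
  from schur_decomposition[OF B cpe sch] have sim: "similar_mat_wit ?B T P Q"
    and ut: "upper_triangular T" and dg: "diag_mat T = es" by auto
  note w = similar_mat_witD2[OF B sim]
  have "det ?B = det (P * T * Q)" using w(3) by simp
  also have "\<dots> = det P * det T * det Q" using w by (simp add: det_mult[of _ n])
  also have "\<dots> = det T * (det P * det Q)" by (simp add: ac_simps)
  also have "det P * det Q = 1"
  proof -
    have "det (P * Q) = det P * det Q" by (rule det_mult[OF w(6) w(7)])
    moreover have "det (P * Q) = 1" unfolding w(1) by simp
    ultimately show ?thesis by simp
  qed
  also have "det T * 1 = prod_list es" using det_upper_triangular[OF ut w(5)] dg by simp
  finally have "det ?B = prod_list es" .
  moreover have "det ?B = 1" using A dA by (simp add: det_mult[of _ n] det_transpose)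
  ultimately show "prod_list es = 1" by simp
qed

locale indrep = ind H G k cs t i0 for H and G (structure) and k cs t i0 +
  fixes d :: nat and \<rho>0 :: "'a \<Rightarrow> real mat"
  assumes rep: "SL_rep (G\<lparr>carrier := H\<rparr>) d \<rho>0" and d2: "2 \<le> d"
begin

lemma rho_c: "h \<in> H \<Longrightarrow> \<rho>0 h \<in> carrier_mat d d" "h \<in> H \<Longrightarrow> det (\<rho>0 h) = 1"
  using rep unfolding SL_rep_def by auto

lemma rho_mult: "h1 \<in> H \<Longrightarrow> h2 \<in> H \<Longrightarrow> \<rho>0 (h1 \<otimes> h2) = \<rho>0 h1 * \<rho>0 h2"
  using rep unfolding SL_rep_def by auto

definition AA where "AA g i = ext d (\<rho>0 (hh g i)) 1"
definition MM where "MM g = KP (Suc d) k (\<sigma> g) (AA g)"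
definition RR where "RR g = ext (Suc d ^ k) (MM g) (det (MM g))"
definition BB where "BB g i = transpose_mat (\<rho>0 (hh g i)) * \<rho>0 (hh g i)"
definition ES where "ES g i = eigs_desc (BB g i)"
definition TT where "TT g i = fst (schur_decomposition (BB g i) (ES g i))"
definition PP where "PP g i = fst (snd (schur_decomposition (BB g i) (ES g i)))"
definition QQ where "QQ g i = snd (snd (schur_decomposition (BB g i) (ES g i)))"
definition \<mu> where "\<mu> g i j = (if j < d then ES g i ! j else 1)"
definition ff where "ff g p = (if p < Suc d ^ k then \<Prod>i<k. \<mu> g i (dig (Suc d) p i) else 1)"

lemma AA_c: "g \<in> carrier G \<Longrightarrow> i < k \<Longrightarrow> AA g i \<in> carrier_mat (Suc d) (Suc d)"
  unfolding AA_def by simp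

lemma MM_c[simp]: "MM g \<in> carrier_mat (Suc d ^ k) (Suc d ^ k)" unfolding MM_def by simp
lemma RR_c[simp]: "RR g \<in> carrier_mat (Suc (Suc d ^ k)) (Suc (Suc d ^ k))" unfolding RR_def by simp

lemma MM_mult: assumes g: "g \<in> carrier G" and g': "g' \<in> carrier G"
  shows "MM (g \<otimes> g') = MM g * MM g'"
proof -
  have "MM g * MM g' = KP (Suc d) k (\<sigma> g \<circ> \<sigma> g') (\<lambda>i. AA g (\<sigma> g' i) * AA g' i)"
    unfolding MM_def by (rule KP_mult, auto intro: AA_c g g' sigma_bij)
  also have "\<dots> = MM (g \<otimes> g')" unfolding MM_def
  proof (rule KP_cong[symmetric])
    fix i assume i: "i < k"
    show "\<sigma> (g \<otimes> g') i = (\<sigma> g \<circ> \<sigma> g') i" using sigma_mult[OF g g' i] by simp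
    have j: "\<sigma> g' i < k" using sigma[OF g' i] by simp
    show "AA (g \<otimes> g') i = AA g (\<sigma> g' i) * AA g' i"
      unfolding AA_def hh_mult[OF g g' i] rho_mult[OF hh_H[OF g j] hh_H[OF g' i]]
      using ext_mult[OF rho_c(1)[OF hh_H[OF g j]] rho_c(1)[OF hh_H[OF g' i]], of 1 1] by simp
  qed
  finally show ?thesis by simp
qed

lemma RR_mult: assumes g: "g \<in> carrier G" and g': "g' \<in> carrier G"
  shows "RR (g \<otimes> g') = RR g * RR g'"
  unfolding RR_def MM_mult[OF g g'] using ext_mult[OF MM_c MM_c] det_mult[OF MM_c MM_c] by simp

lemma ES_props: assumes g: "g \<in> carrier G" and i: "i < k"
  shows "sorted_wrt (\<ge>) (ES g i)" "\<forall>x\<in>set (ES g i). x > 0" "length (ES g i) = d"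
    "char_poly (BB g i) = (\<Prod>x\<leftarrow>ES g i. [:-x, 1:])" "prod_list (ES g i) = 1"
  using AtA_eigs[OF rho_c[OF hh_H[OF g i]]] unfolding ES_def BB_def by auto

lemma BB_c: assumes g: "g \<in> carrier G" and i: "i < k" shows "BB g i \<in> carrier_mat d d"
proof -
  have "\<rho>0 (hh g i) \<in> carrier_mat d d" by (rule rho_c(1)[OF hh_H[OF g i]])
  thus ?thesis unfolding BB_def by simp
qed

lemma schur_props: assumes g: "g \<in> carrier G" and i: "i < k"
  shows "similar_mat_wit (BB g i) (TT g i) (PP g i) (QQ g i)" "upper_triangular (TT g i)"
    "diag_mat (TT g i) = ES g i"
proof -
  have "schur_decomposition (BB g i) (ES g i) = (TT g i, PP g i, QQ g i)"
    unfolding TT_def PP_def QQ_def by simp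
  from schur_decomposition[OF BB_c[OF g i] ES_props(4)[OF g i] this]
  show "similar_mat_wit (BB g i) (TT g i) (PP g i) (QQ g i)" "upper_triangular (TT g i)"
    "diag_mat (TT g i) = ES g i" by auto
qed

lemma TPQ_c: assumes g: "g \<in> carrier G" and i: "i < k"
  shows "TT g i \<in> carrier_mat d d" "PP g i \<in> carrier_mat d d" "QQ g i \<in> carrier_mat d d"
  using similar_mat_witD2[OF BB_c[OF g i] schur_props(1)[OF g i]] by auto

lemma AtA: assumes g: "g \<in> carrier G" and i: "i < k"
  shows "transpose_mat (AA g i) * AA g i = ext d (BB g i) 1"
proof -
  have c: "\<rho>0 (hh g i) \<in> carrier_mat d d" using rho_c hh_H[OF g i] by auto
  show ?thesis unfolding AA_def BB_def ext_transpose[OF c]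
    using ext_mult[of "transpose_mat (\<rho>0 (hh g i))" d "\<rho>0 (hh g i)" 1 1] c by simp
qed

lemma MtM: assumes g: "g \<in> carrier G"
  shows "transpose_mat (MM g) * MM g = KP (Suc d) k id (\<lambda>i. ext d (BB g i) 1)"
proof -
  let ?s = "the_inv_into {..<k} (\<sigma> g)"
  have sb: "bij_betw ?s {..<k} {..<k}" by (rule bij_betw_the_inv_into[OF sigma_bij[OF g]])
  have sk: "i < k \<Longrightarrow> ?s i < k" for i using sb by (auto simp: bij_betw_def)
  have "transpose_mat (MM g) = KP (Suc d) k ?s (\<lambda>i. transpose_mat (AA g (?s i)))"
    unfolding MM_def by (rule KP_transpose, auto intro: AA_c g sigma_bij)
  hence "transpose_mat (MM g) * MM g = KP (Suc d) k ?s (\<lambda>i. transpose_mat (AA g (?s i))) * KP (Suc d) k (\<sigma> g) (AA g)"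
    unfolding MM_def by simp
  also have "\<dots> = KP (Suc d) k (?s \<circ> \<sigma> g) (\<lambda>i. transpose_mat (AA g (?s (\<sigma> g i))) * AA g i)"
    by (rule KP_mult, auto intro: AA_c g sigma_bij sk)
  also have "\<dots> = KP (Suc d) k id (\<lambda>i. ext d (BB g i) 1)"
  proof (rule KP_cong)
    fix i assume i: "i < k"
    have e: "?s (\<sigma> g i) = i" using the_inv_into_f_f[OF bij_betw_imp_inj_on[OF sigma_bij[OF g]]] i by simp
    show "(?s \<circ> \<sigma> g) i = id i" using e by simp
    show "transpose_mat (AA g (?s (\<sigma> g i))) * AA g i = ext d (BB g i) 1" using e AtA[OF g i] by simp
  qed
  finally show ?thesis .
qed

end

lemma dig_zero: "dig D 0 i = 0" by (simp add: dig_def)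

lemma prod_gap:
  fixes \<mu> :: "nat \<Rightarrow> nat \<Rightarrow> real"
  assumes D: "0 < D" and pos: "\<And>i j. i < k \<Longrightarrow> j < D \<Longrightarrow> 0 < \<mu> i j"
    and le: "\<And>i j. i < k \<Longrightarrow> j < D \<Longrightarrow> j \<noteq> 0 \<Longrightarrow> \<mu> i j \<le> \<mu> i 0 * exp (- \<Lambda>)"
    and le0: "\<And>i j. i < k \<Longrightarrow> j < D \<Longrightarrow> \<mu> i j \<le> \<mu> i 0"
    and p: "p < D ^ k" "p \<noteq> 0"
  shows "(\<Prod>i<k. \<mu> i (dig D p i)) \<le> (\<Prod>i<k. \<mu> i 0) * exp (- \<Lambda>)"
proof -
  have "\<exists>i<k. dig D p i \<noteq> 0"
  proof (rule ccontr)
    assume "\<not> ?thesis"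
    hence "\<And>i. i < k \<Longrightarrow> dig D p i = dig D 0 i" by (simp add: dig_zero)
    hence "p = 0" using dig_inj[OF D p(1), of 0] D by simp
    thus False using p(2) by simp
  qed
  then obtain i1 where i1: "i1 < k" "dig D p i1 \<noteq> 0" by blast
  have dl: "\<And>i. dig D p i < D" using dig_less[OF D] by simp
  have "(\<Prod>i<k. \<mu> i (dig D p i)) = \<mu> i1 (dig D p i1) * (\<Prod>i\<in>{..<k} - {i1}. \<mu> i (dig D p i))"
    using i1 by (simp add: prod.remove)
  also have "\<dots> \<le> (\<mu> i1 0 * exp (- \<Lambda>)) * (\<Prod>i\<in>{..<k} - {i1}. \<mu> i 0)"
  proof (rule mult_mono)
    show "\<mu> i1 (dig D p i1) \<le> \<mu> i1 0 * exp (- \<Lambda>)" using le[OF i1(1) dl i1(2)] .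
    show "(\<Prod>i\<in>{..<k} - {i1}. \<mu> i (dig D p i)) \<le> (\<Prod>i\<in>{..<k} - {i1}. \<mu> i 0)"
      by (rule prod_mono, auto intro: le0 dl less_imp_le pos)
    show "0 \<le> \<mu> i1 0 * exp (- \<Lambda>)" using pos[OF i1(1) D] by simp
    show "0 \<le> (\<Prod>i\<in>{..<k} - {i1}. \<mu> i (dig D p i))"
      by (rule prod_nonneg, auto intro: less_imp_le pos dl)
  qed
  also have "\<dots> = (\<Prod>i<k. \<mu> i 0) * exp (- \<Lambda>)"
    using i1 by (simp add: prod.remove ac_simps)
  finally show ?thesis .
qed

lemma prod_top:
  fixes \<mu> :: "nat \<Rightarrow> nat \<Rightarrow> real"
  assumes i0: "i0 < k" and ge1: "\<And>i. i < k \<Longrightarrow> 1 \<le> \<mu> i 0" and e: "exp \<Lambda> \<le> \<mu> i0 0"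
  shows "1 \<le> (\<Prod>i<k. \<mu> i 0) * exp (- \<Lambda>)"
proof -
  have "(\<Prod>i<k. \<mu> i 0) = \<mu> i0 0 * (\<Prod>i\<in>{..<k} - {i0}. \<mu> i 0)"
    using i0 by (simp add: prod.remove)
  moreover have "1 \<le> (\<Prod>i\<in>{..<k} - {i0}. \<mu> i 0)" by (rule prod_ge_1) (auto intro: ge1)
  moreover have "\<mu> i0 0 * 1 \<le> \<mu> i0 0 * (\<Prod>i\<in>{..<k} - {i0}. \<mu> i 0)"
    by (rule mult_left_mono, fact, insert ge1[OF i0], simp)
  ultimately have "exp \<Lambda> \<le> (\<Prod>i<k. \<mu> i 0)" using e by simp
  hence "exp \<Lambda> * exp (- \<Lambda>) \<le> (\<Prod>i<k. \<mu> i 0) * exp (- \<Lambda>)" by simp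
  thus ?thesis by (simp add: exp_minus_inverse)
qed

context indrep begin

definition eT where "eT g i = ext d (TT g i) 1"
definition eP where "eP g i = ext d (PP g i) 1"
definition eQ where "eQ g i = ext d (QQ g i) 1"

lemma ext_sim: assumes g: "g \<in> carrier G" and i: "i < k"
  shows "ext d (BB g i) 1 = eP g i * eT g i * eQ g i" "eP g i * eQ g i = 1\<^sub>m (Suc d)"
    "eQ g i * eP g i = 1\<^sub>m (Suc d)"
proof -
  note w = similar_mat_witD2[OF ext_carrier ext_similar[OF schur_props(1)[OF g i] BB_c[OF g i], of 1]]
  show "ext d (BB g i) 1 = eP g i * eT g i * eQ g i" unfolding eT_def eP_def eQ_def by (rule w(3))
  show "eP g i * eQ g i = 1\<^sub>m (Suc d)" unfolding eT_def eP_def eQ_def by (rule w(1))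
  show "eQ g i * eP g i = 1\<^sub>m (Suc d)" unfolding eT_def eP_def eQ_def by (rule w(2))
qed

lemma e_c: "eT g i \<in> carrier_mat (Suc d) (Suc d)" "eP g i \<in> carrier_mat (Suc d) (Suc d)"
  "eQ g i \<in> carrier_mat (Suc d) (Suc d)"
  unfolding eT_def eP_def eQ_def by auto

lemma bij_id: "bij_betw id {..<k} {..<k}" by simp

lemma KP_id3: "KP (Suc d) k id F * KP (Suc d) k id G' * KP (Suc d) k id H' = KP (Suc d) k id (\<lambda>i. F i * G' i * H' i)"
  if "\<And>i. i < k \<Longrightarrow> F i \<in> carrier_mat (Suc d) (Suc d)" "\<And>i. i < k \<Longrightarrow> G' i \<in> carrier_mat (Suc d) (Suc d)"
    "\<And>i. i < k \<Longrightarrow> H' i \<in> carrier_mat (Suc d) (Suc d)" for F G' H'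
proof -
  have "KP (Suc d) k id F * KP (Suc d) k id G' = KP (Suc d) k (id \<circ> id) (\<lambda>i. F (id i) * G' i)"
    by (rule KP_mult, insert that, auto intro!: mult_carrier_mat)
  also have "\<dots> = KP (Suc d) k id (\<lambda>i. F i * G' i)" by simp
  finally have 1: "KP (Suc d) k id F * KP (Suc d) k id G' = KP (Suc d) k id (\<lambda>i. F i * G' i)" .
  have "KP (Suc d) k id (\<lambda>i. F i * G' i) * KP (Suc d) k id H' = KP (Suc d) k (id \<circ> id) (\<lambda>i. (F (id i) * G' (id i)) * H' i)"
    by (rule KP_mult, insert that, auto intro!: mult_carrier_mat)
  also have "\<dots> = KP (Suc d) k id (\<lambda>i. F i * G' i * H' i)" by simp
  finally show ?thesis unfolding 1 .
qed

lemma KP_id2: "KP (Suc d) k id F * KP (Suc d) k id G' = KP (Suc d) k id (\<lambda>i. F i * G' i)"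
  if "\<And>i. i < k \<Longrightarrow> F i \<in> carrier_mat (Suc d) (Suc d)" "\<And>i. i < k \<Longrightarrow> G' i \<in> carrier_mat (Suc d) (Suc d)" for F G'
proof -
  have "KP (Suc d) k id F * KP (Suc d) k id G' = KP (Suc d) k (id \<circ> id) (\<lambda>i. F (id i) * G' i)"
    by (rule KP_mult, insert that, auto intro!: mult_carrier_mat)
  also have "\<dots> = KP (Suc d) k id (\<lambda>i. F i * G' i)" by simp
  finally show ?thesis .
qed

lemma sim_MtM: assumes g: "g \<in> carrier G"
  shows "similar_mat_wit (transpose_mat (MM g) * MM g) (KP (Suc d) k id (eT g)) (KP (Suc d) k id (eP g)) (KP (Suc d) k id (eQ g))"
proof -
  let ?N = "Suc d ^ k"
  have "transpose_mat (MM g) * MM g = KP (Suc d) k id (\<lambda>i. eP g i * eT g i * eQ g i)"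
    unfolding MtM[OF g] by (rule KP_cong, auto simp: ext_sim[OF g])
  also have "\<dots> = KP (Suc d) k id (eP g) * KP (Suc d) k id (eT g) * KP (Suc d) k id (eQ g)"
    by (rule KP_id3[symmetric], auto simp: e_c)
  finally have 1: "transpose_mat (MM g) * MM g = KP (Suc d) k id (eP g) * KP (Suc d) k id (eT g) * KP (Suc d) k id (eQ g)" .
  have 2: "KP (Suc d) k id (eP g) * KP (Suc d) k id (eQ g) = 1\<^sub>m ?N"
    by (subst KP_id2, auto simp: e_c, rule KP_one, auto simp: ext_sim[OF g])
  have 3: "KP (Suc d) k id (eQ g) * KP (Suc d) k id (eP g) = 1\<^sub>m ?N"
    by (subst KP_id2, auto simp: e_c, rule KP_one, auto simp: ext_sim[OF g])
  have c: "transpose_mat (MM g) * MM g \<in> carrier_mat ?N ?N" by (rule mult_carrier_mat[OF _ MM_c], simp)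
  show ?thesis unfolding similar_mat_wit_def Let_def using 1 2 3 c by auto
qed

lemma diag_TT: assumes g: "g \<in> carrier G" and i: "i < k" and j: "j < d"
  shows "TT g i $$ (j, j) = ES g i ! j"
proof -
  have "diag_mat (TT g i) ! j = TT g i $$ (j, j)" using TPQ_c(1)[OF g i] j by (simp add: diag_mat_def)
  thus ?thesis using schur_props(3)[OF g i] by simp
qed

lemma eT_diag: assumes g: "g \<in> carrier G" and i: "i < k" and j: "j < Suc d"
  shows "eT g i $$ (j, j) = \<mu> g i j"
  unfolding eT_def \<mu>_def using j diag_TT[OF g i] by (simp add: ext_index)

lemma KPT_diag: assumes g: "g \<in> carrier G" and p: "p < Suc d ^ k"
  shows "KP (Suc d) k id (eT g) $$ (p, p) = (\<Prod>i<k. \<mu> g i (dig (Suc d) p i))"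
  using p by (simp add: KP_index eT_diag[OF g] dig_less)

lemma fb: assumes g: "g \<in> carrier G" and i: "i < k"
  defines "gg \<equiv> ln (sqrt (ES g i ! 0)) - ln (sqrt (ES g i ! 1))"
  shows "0 \<le> gg" "exp gg \<le> \<mu> g i 0" "\<And>j. j < Suc d \<Longrightarrow> j \<noteq> 0 \<Longrightarrow> \<mu> g i j \<le> \<mu> g i 0 * exp (- gg)"
    "\<And>j. 0 < \<mu> g i j" "(\<Prod>j<Suc d. \<mu> g i j) = 1" "1 \<le> \<mu> g i 0"
  using factor_bounds[OF ES_props(1,2,3)[OF g i] d2 ES_props(5)[OF g i]]
  unfolding gg_def \<mu>_def[abs_def] by auto

lemma KPT_upper: assumes g: "g \<in> carrier G" shows "upper_triangular (KP (Suc d) k id (eT g))"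
proof (rule KP_upper)
  fix i assume i: "i < k"
  show "eT g i \<in> carrier_mat (Suc d) (Suc d)" by (rule e_c)
  show "upper_triangular (eT g i)" unfolding eT_def by (rule ext_upper[OF TPQ_c(1)[OF g i] schur_props(2)[OF g i]])
qed auto

lemma det_MtM: assumes g: "g \<in> carrier G" shows "det (transpose_mat (MM g) * MM g) = 1"
proof -
  let ?N = "Suc d ^ k"
  have "det (transpose_mat (MM g) * MM g) = det (KP (Suc d) k id (eT g))"
  proof -
    have cA: "transpose_mat (MM g) * MM g \<in> carrier_mat ?N ?N" by (rule mult_carrier_mat[OF _ MM_c], simp)
    note w = similar_mat_witD2[OF cA sim_MtM[OF g]]
    have "det (transpose_mat (MM g) * MM g) = det (KP (Suc d) k id (eP g)) * det (KP (Suc d) k id (eT g)) * det (KP (Suc d) k id (eQ g))"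
      unfolding w(3) using det_mult[OF mult_carrier_mat[OF KP_carrier KP_carrier] KP_carrier, of "Suc d" k id "eP g" id "eT g" id "eQ g"]
        det_mult[OF KP_carrier KP_carrier, of "Suc d" k id "eP g" id "eT g"] by simp
    also have "\<dots> = det (KP (Suc d) k id (eT g)) * (det (KP (Suc d) k id (eP g)) * det (KP (Suc d) k id (eQ g)))"
      by (simp add: ac_simps)
    also have "det (KP (Suc d) k id (eP g)) * det (KP (Suc d) k id (eQ g)) = 1"
    proof -
      have "det (KP (Suc d) k id (eP g) * KP (Suc d) k id (eQ g)) = det (KP (Suc d) k id (eP g)) * det (KP (Suc d) k id (eQ g))"
        by (rule det_mult[OF KP_carrier KP_carrier])
      moreover have "det (KP (Suc d) k id (eP g) * KP (Suc d) k id (eQ g)) = 1" unfolding w(1) by simp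
      ultimately show ?thesis by simp
    qed
    finally show ?thesis by (simp only: mult_1_right)
  qed
  also have "\<dots> = prod_list (diag_mat (KP (Suc d) k id (eT g)))"
    by (rule det_upper_triangular[OF KPT_upper[OF g] KP_carrier])
  also have "\<dots> = (\<Prod>p = 0..<?N. KP (Suc d) k id (eT g) $$ (p, p))" by (simp add: prod_list_diag_prod)
  also have "\<dots> = (\<Prod>p<?N. \<Prod>i<k. \<mu> g i (dig (Suc d) p i))"
    by (simp add: atLeast0LessThan KPT_diag[OF g])
  also have "\<dots> = 1" by (rule prod_prod_dig_one, rule fb(5)[OF g])
  finally show ?thesis .
qed

lemma detM: assumes g: "g \<in> carrier G" shows "det (MM g) * det (MM g) = 1"
  using det_MtM[OF g] det_mult[OF _ MM_c, of "transpose_mat (MM g)"] det_transpose[OF MM_c] by simp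

lemma RtR: assumes g: "g \<in> carrier G"
  shows "transpose_mat (RR g) * RR g = ext (Suc d ^ k) (transpose_mat (MM g) * MM g) 1"
  unfolding RR_def ext_transpose[OF MM_c] using ext_mult[of "transpose_mat (MM g)" "Suc d ^ k" "MM g"] detM[OF g] by simp

lemma cp_RtR: assumes g: "g \<in> carrier G"
  shows "char_poly (transpose_mat (RR g) * RR g) = (\<Prod>p\<leftarrow>[0..<Suc (Suc d ^ k)]. [:- ff g p, 1:])"
proof -
  let ?N = "Suc d ^ k"
  let ?X = "ext ?N (KP (Suc d) k id (eT g)) 1"
  have cA: "transpose_mat (MM g) * MM g \<in> carrier_mat ?N ?N" by (rule mult_carrier_mat[OF _ MM_c], simp)
  have "similar_mat (transpose_mat (RR g) * RR g) ?X"
    unfolding RtR[OF g] similar_mat_def using ext_similar[OF sim_MtM[OF g] cA, of 1] by blast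
  hence "char_poly (transpose_mat (RR g) * RR g) = char_poly ?X" by (rule char_poly_similar)
  also have "\<dots> = (\<Prod>a\<leftarrow>diag_mat ?X. [:- a, 1:])"
    by (rule char_poly_upper_triangular[OF ext_carrier ext_upper[OF KP_carrier KPT_upper[OF g]]])
  also have "diag_mat ?X = map (ff g) [0..<Suc ?N]"
    unfolding diag_mat_def by (rule map_cong, simp, auto simp: ext_index ff_def KPT_diag[OF g])
  also have "(\<Prod>a\<leftarrow>map (ff g) [0..<Suc ?N]. [:- a, 1:]) = (\<Prod>p\<leftarrow>[0..<Suc ?N]. [:- ff g p, 1:])"
    by (simp only: map_map comp_def)
  finally show ?thesis .
qed

end

lemma idem_one:
  fixes A :: "real mat"
  assumes A: "A \<in> carrier_mat n n" and dA: "det A \<noteq> 0" and AA: "A * A = A"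
  shows "A = 1\<^sub>m n"
proof -
  have "A \<in> Units (ring_mat TYPE(real) n undefined)" by (rule det_non_zero_imp_unit[OF A dA])
  then obtain B where B: "B \<in> carrier_mat n n" "B * A = 1\<^sub>m n"
    unfolding Units_def ring_mat_def by auto
  have "A = (B * A) * A" using B A by simp
  also have "\<dots> = B * (A * A)" by (rule assoc_mult_mat[OF B(1) A A])
  also have "\<dots> = 1\<^sub>m n" using AA B by simp
  finally show ?thesis .
qed

context indrep begin

lemma RR_gap:
  assumes g: "g \<in> carrier G" and L0: "0 \<le> \<Lambda>"
    and L: "\<And>i. i < k \<Longrightarrow> \<Lambda> \<le> ln (sqrt (ES g i ! 0)) - ln (sqrt (ES g i ! 1))"
  shows "\<Lambda> / 2 \<le> mu 1 (RR g) - mu 2 (RR g)"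
proof -
  let ?N = "Suc d ^ k"
  define f0 where "f0 = (\<Prod>i<k. \<mu> g i 0)"
  have Npos: "0 < ?N" by simp
  have ff0: "ff g 0 = f0" unfolding ff_def f0_def using Npos by (simp add: dig_zero)
  have mpos: "\<And>i j. i < k \<Longrightarrow> 0 < \<mu> g i j" using fb(4)[OF g] by blast
  have f0pos: "0 < f0" unfolding f0_def
  proof (rule prod_pos)
    fix i assume "i \<in> {..<k}" thus "0 < \<mu> g i 0" using fb(4)[OF g] by simp
  qed
  define \<beta> where "\<beta> = f0 * exp (- \<Lambda>)"
  have le: "\<mu> g i j \<le> \<mu> g i 0 * exp (- \<Lambda>)" if i: "i < k" and j: "j < Suc d" "j \<noteq> 0" for i j
  proof -
    have "\<mu> g i j \<le> \<mu> g i 0 * exp (- (ln (sqrt (ES g i ! 0)) - ln (sqrt (ES g i ! 1))))"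
      by (rule fb(3)[OF g i j])
    also have "\<dots> \<le> \<mu> g i 0 * exp (- \<Lambda>)"
      using L[OF i] fb(4)[OF g i, of 0] by (intro mult_left_mono) auto
    finally show ?thesis .
  qed
  have le0: "\<mu> g i j \<le> \<mu> g i 0" if i: "i < k" and j: "j < Suc d" for i j
  proof (cases "j = 0")
    case False
    have "\<mu> g i 0 * exp (- \<Lambda>) \<le> \<mu> g i 0 * 1"
      using L0 fb(4)[OF g i, of 0] by (intro mult_left_mono) auto
    thus ?thesis using le[OF i j False] by simp
  qed simp
  have pos: "0 < ff g p" if "p < Suc ?N" for p
    unfolding ff_def by (auto intro!: prod_pos mpos)
  have bnd: "ff g p \<le> \<beta>" if p: "p < Suc ?N" "p \<noteq> 0" for p
  proof (cases "p < ?N")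
    case True
    have "ff g p = (\<Prod>i<k. \<mu> g i (dig (Suc d) p i))" using True by (simp add: ff_def)
    also have "\<dots> \<le> (\<Prod>i<k. \<mu> g i 0) * exp (- \<Lambda>)"
      by (rule prod_gap[of "Suc d" k "\<mu> g" \<Lambda> p, OF _ _ le le0 True p(2)], auto intro: mpos)
    finally show ?thesis unfolding \<beta>_def f0_def .
  next
    case False
    have e: "exp \<Lambda> \<le> \<mu> g i0 0"
    proof -
      have "exp \<Lambda> \<le> exp (ln (sqrt (ES g i0 ! 0)) - ln (sqrt (ES g i0 ! 1)))"
        using L[OF i0(1)] by simp
      also have "\<dots> \<le> \<mu> g i0 0" by (rule fb(2)[OF g i0(1)])
      finally show ?thesis .
    qed
    have "1 \<le> (\<Prod>i<k. \<mu> g i 0) * exp (- \<Lambda>)"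
      by (rule prod_top[of i0 k "\<mu> g" \<Lambda>, OF i0(1) _ e], rule fb(6)[OF g])
    thus ?thesis using False by (simp add: ff_def \<beta>_def f0_def)
  qed
  have top: "\<beta> \<le> ff g 0"
  proof -
    have "f0 * exp (- \<Lambda>) \<le> f0 * 1" using L0 f0pos by (intro mult_left_mono) auto
    thus ?thesis unfolding \<beta>_def ff0 by simp
  qed
  have n2: "2 \<le> Suc ?N" using Npos by simp
  from gap_lemma[OF cp_RtR[OF g] n2 _ pos bnd top]
  have G: "eigs_desc (transpose_mat (RR g) * RR g) ! 0 = f0"
    "0 < eigs_desc (transpose_mat (RR g) * RR g) ! 1"
    "eigs_desc (transpose_mat (RR g) * RR g) ! 1 \<le> \<beta>" using ff0 by auto
  define b where "b = eigs_desc (transpose_mat (RR g) * RR g) ! 1"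
  have m1: "mu 1 (RR g) = ln f0 / 2" unfolding mu_def sing_sq_def using G(1) f0pos by (simp add: ln_sqrt)
  have m2: "mu 2 (RR g) = ln b / 2" unfolding mu_def sing_sq_def b_def using G(2) by (simp add: ln_sqrt)
  have "ln b \<le> ln \<beta>" using G(2,3) unfolding b_def by simp
  also have "ln \<beta> = ln f0 - \<Lambda>" unfolding \<beta>_def using f0pos by (simp add: ln_mult_pos)
  finally show ?thesis unfolding m1 m2 by simp
qed

lemma RR_SL: "SL_rep G (Suc (Suc d ^ k)) RR"
  unfolding SL_rep_def
proof (intro conjI ballI)
  fix g assume g: "g \<in> carrier G"
  show "RR g \<in> carrier_mat (Suc (Suc d ^ k)) (Suc (Suc d ^ k))" by simp
  show "det (RR g) = 1" unfolding RR_def using ext_det[OF MM_c] detM[OF g] by simp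
next
  fix g h assume "g \<in> carrier G" "h \<in> carrier G"
  thus "RR (g \<otimes> h) = RR g * RR h" by (rule RR_mult)
qed

lemma rho_one: "\<rho>0 \<one> = 1\<^sub>m d"
proof (rule idem_one[OF rho_c(1)])
  show "\<one> \<in> H" by simp
  show "det (\<rho>0 \<one>) \<noteq> 0" using rho_c(2)[of \<one>] by simp
  show "\<rho>0 \<one> * \<rho>0 \<one> = \<rho>0 \<one>" using rho_mult[of \<one> \<one>] by simp
qed

lemma MM_one: "MM \<one> = 1\<^sub>m (Suc d ^ k)"
  unfolding MM_def
  by (rule KP_one, auto simp: sigma_one AA_def hh_one rho_one ext_one)

lemma RR_one: "RR \<one> = 1\<^sub>m (Suc (Suc d ^ k))"
  unfolding RR_def MM_one by (simp add: ext_one)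

lemma MM_trivial:
  assumes z: "z \<in> carrier G" and M: "MM z = 1\<^sub>m (Suc d ^ k)" and inj: "inj_on \<rho>0 H"
  shows "z = \<one>"
proof -
  let ?D = "Suc d"
  let ?N = "Suc d ^ k"
  have D: "0 < ?D" by simp
  have Mi: "\<And>p q. p < ?N \<Longrightarrow> q < ?N \<Longrightarrow> (\<Prod>i<k. AA z i $$ (dig ?D p (\<sigma> z i), dig ?D q i)) = (if p = q then 1 else 0)"
  proof -
    fix p q assume p: "p < ?N" and q: "q < ?N"
    have "MM z $$ (p, q) = 1\<^sub>m ?N $$ (p, q)" using M by simp
    thus "(\<Prod>i<k. AA z i $$ (dig ?D p (\<sigma> z i), dig ?D q i)) = (if p = q then 1 else 0)"
      unfolding MM_def using p q by (simp add: KP_index)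
  qed
  have AAi: "AA z i $$ (a, b) = (if a < d \<and> b < d then \<rho>0 (hh z i) $$ (a, b) else if a = b then 1 else 0)"
    if "a < ?D" "b < ?D" for i a b unfolding AA_def using that by (simp add: ext_index)
  have sk: "\<And>i. i < k \<Longrightarrow> \<sigma> z i < k" using sigma[OF z] by blast
  have sinj: "inj_on (\<sigma> z) {..<k}" using bij_betw_imp_inj_on[OF sigma_bij[OF z]] .
  have fix0: "\<sigma> z i0 = i0"
  proof (rule ccontr)
    assume ne: "\<sigma> z i0 \<noteq> i0"
    have "i0 \<in> \<sigma> z ` {..<k}" using bij_betw_imp_surj_on[OF sigma_bij[OF z]] i0(1) by auto
    then obtain i1 where i1: "i1 < k" "\<sigma> z i1 = i0" by auto
    have i1ne: "i1 \<noteq> i0" using i1 ne by auto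
    obtain q where q: "q < ?N" "\<forall>i<k. dig ?D q i = (if i = i0 then 0 else d)"
    proof -
      have "\<exists>q<?N. \<forall>i<k. dig ?D q i = (if i = i0 then 0 else d)" by (rule dig_surj[OF D]) auto
      thus ?thesis using that by blast
    qed
    have "AA z i1 $$ (dig ?D q (\<sigma> z i1), dig ?D q i1) = 0"
      using q(2) i1 i1ne i0(1) d2 by (simp add: AAi)
    hence "(\<Prod>i<k. AA z i $$ (dig ?D q (\<sigma> z i), dig ?D q i)) = 0"
      by (intro prod_zero) (auto intro!: bexI[of _ i1] simp: i1)
    thus False using Mi[OF q(1) q(1)] by simp
  qed
  have c: "\<rho>0 (hh z i0) \<in> carrier_mat d d" using rho_c(1) hh_H[OF z i0(1)] by blast
  have "\<rho>0 (hh z i0) = 1\<^sub>m d"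
  proof (rule eq_matI)
    fix a b assume "a < dim_row (1\<^sub>m d :: real mat)" "b < dim_col (1\<^sub>m d :: real mat)"
    hence a: "a < d" and b: "b < d" by auto
    obtain p where p: "p < ?N" "\<forall>i<k. dig ?D p i = (if i = i0 then a else d)"
    proof -
      have "\<exists>q<?N. \<forall>i<k. dig ?D q i = (if i = i0 then a else d)" by (rule dig_surj[OF D]) (use a in auto)
      thus ?thesis using that by blast
    qed
    obtain q where q: "q < ?N" "\<forall>i<k. dig ?D q i = (if i = i0 then b else d)"
    proof -
      have "\<exists>q<?N. \<forall>i<k. dig ?D q i = (if i = i0 then b else d)" by (rule dig_surj[OF D]) (use b in auto)
      thus ?thesis using that by blast
    qed
    have other: "AA z i $$ (dig ?D p (\<sigma> z i), dig ?D q i) = 1" if i: "i \<in> {..<k} - {i0}" for i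
    proof -
      have ik: "i < k" "i \<noteq> i0" using i by auto
      have "\<sigma> z i \<noteq> i0"
      proof
        assume "\<sigma> z i = i0"
        hence "\<sigma> z i = \<sigma> z i0" using fix0 by simp
        hence "i = i0" using inj_onD[OF sinj] ik(1) i0(1) by blast
        thus False using ik(2) by simp
      qed
      hence "dig ?D p (\<sigma> z i) = d" using p(2) sk[OF ik(1)] by simp
      moreover have "dig ?D q i = d" using q(2) ik by simp
      ultimately show ?thesis by (simp add: AAi)
    qed
    have "(\<Prod>i<k. AA z i $$ (dig ?D p (\<sigma> z i), dig ?D q i))
        = AA z i0 $$ (dig ?D p (\<sigma> z i0), dig ?D q i0) * (\<Prod>i\<in>{..<k} - {i0}. AA z i $$ (dig ?D p (\<sigma> z i), dig ?D q i))"
      using i0(1) by (simp add: prod.remove)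
    also have "(\<Prod>i\<in>{..<k} - {i0}. AA z i $$ (dig ?D p (\<sigma> z i), dig ?D q i)) = 1"
      using other by simp
    also have "AA z i0 $$ (dig ?D p (\<sigma> z i0), dig ?D q i0) = \<rho>0 (hh z i0) $$ (a, b)"
      using fix0 p(2) q(2) i0(1) a b by (simp add: AAi)
    finally have e1: "(\<Prod>i<k. AA z i $$ (dig ?D p (\<sigma> z i), dig ?D q i)) = \<rho>0 (hh z i0) $$ (a, b)" by simp
    have pq: "(p = q) = (a = b)"
    proof
      assume "p = q" thus "a = b" using p(2) q(2) i0(1) by auto
    next
      assume ab: "a = b"
      show "p = q" by (rule dig_inj[OF D p(1) q(1)], insert p(2) q(2) ab, auto)
    qed
    show "\<rho>0 (hh z i0) $$ (a, b) = 1\<^sub>m d $$ (a, b)"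
      using Mi[OF p(1) q(1)] e1 pq a b by simp
  qed (insert c, auto)
  hence "\<rho>0 (hh z i0) = \<rho>0 \<one>" by (simp add: rho_one)
  hence h1: "hh z i0 = \<one>" by (rule inj_onD[OF inj _ hh_H[OF z i0(1)] subgroup.one_closed[OF sg]])
  have "z = t (\<sigma> z i0) \<otimes> (hh z i0 \<otimes> inv (t i0))" using decomp[OF z i0(1)] by simp
  also have "\<dots> = \<one>" unfolding h1 fix0 using i0(1) by simp
  finally show ?thesis .
qed

lemma RR_inj: assumes inj: "inj_on \<rho>0 H" shows "inj_on RR (carrier G)"
proof (rule inj_onI)
  fix x y assume x: "x \<in> carrier G" and y: "y \<in> carrier G" and e: "RR x = RR y"
  let ?z = "inv y \<otimes> x"
  have z: "?z \<in> carrier G" using x y by simp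
  have "RR ?z = RR (inv y) * RR x" using RR_mult x y by simp
  also have "\<dots> = RR (inv y) * RR y" using e by simp
  also have "\<dots> = RR (inv y \<otimes> y)" by (rule RR_mult[symmetric], insert y, auto)
  also have "\<dots> = 1\<^sub>m (Suc (Suc d ^ k))" using y by (simp add: RR_one)
  finally have Rz: "RR ?z = 1\<^sub>m (Suc (Suc d ^ k))" .
  have "MM ?z = 1\<^sub>m (Suc d ^ k)"
  proof (rule eq_matI)
    fix p q assume "p < dim_row (1\<^sub>m (Suc d ^ k) :: real mat)" "q < dim_col (1\<^sub>m (Suc d ^ k) :: real mat)"
    hence p: "p < Suc d ^ k" and q: "q < Suc d ^ k" by auto
    have "RR ?z $$ (p, q) = MM ?z $$ (p, q)" unfolding RR_def using p q by (simp add: ext_index)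
    thus "MM ?z $$ (p, q) = 1\<^sub>m (Suc d ^ k) $$ (p, q)" using Rz p q by simp
  qed (simp_all add: MM_def)
  hence "?z = \<one>" by (rule MM_trivial[OF z _ inj])
  hence "y \<otimes> (inv y \<otimes> x) = y" using y by simp
  thus "x = y" using x y by (simp add: mult_inv_cancel)
qed

lemma word_bound:
  assumes SH: "SH \<subseteq> H" "generate (G\<lparr>carrier := H\<rparr>) SH = H"
    and g: "g \<in> carrier G" and i: "i < k"
  shows "word_length G (SH \<union> t ` {..<k}) g \<le> word_length (G\<lparr>carrier := H\<rparr>) SH (hh g i) + 2"
proof -
  have GH: "group (G\<lparr>carrier := H\<rparr>)" by (rule subgroup.subgroup_is_group[OF sg is_group])
  have "\<exists>w. fst ` set w \<subseteq> SH \<and> word_eval (G\<lparr>carrier := H\<rparr>) w = hh g i"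
    by (rule gen_word[OF GH], insert SH hh_H[OF g i], auto)
  from word_length_ex[OF this] obtain w where w: "length w = word_length (G\<lparr>carrier := H\<rparr>) SH (hh g i)"
    "fst ` set w \<subseteq> SH" "word_eval (G\<lparr>carrier := H\<rparr>) w = hh g i" by blast
  have wH: "fst ` set w \<subseteq> H" using w(2) SH by auto
  have wc: "fst ` set w \<subseteq> carrier G" using wH subset by auto
  have we: "word_eval G w = hh g i" using word_eval_sub[OF is_group sg wH] w(3) by simp
  have j: "\<sigma> g i < k" using sigma[OF g i] by simp
  define ws where "ws = (t (\<sigma> g i), True) # (w @ [(t i, False)])"
  have "word_eval G (w @ [(t i, False)]) = word_eval G w \<otimes> word_eval G [(t i, False)]"
    by (rule word_eval_append[OF is_group wc], insert i, auto)
  hence "word_eval G ws = t (\<sigma> g i) \<otimes> (hh g i \<otimes> inv (t i))" unfolding ws_def using we i by simp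
  hence ev: "word_eval G ws = g" using decomp[OF g i] by simp
  have lt: "fst ` set ws \<subseteq> SH \<union> t ` {..<k}" unfolding ws_def using w(2) i j by auto
  have "word_length G (SH \<union> t ` {..<k}) g \<le> length ws" by (rule word_length_le[OF lt ev])
  thus ?thesis unfolding ws_def using w(1) by simp
qed

lemma gen_all:
  assumes SH: "SH \<subseteq> H" "generate (G\<lparr>carrier := H\<rparr>) SH = H"
  shows "generate G (SH \<union> t ` {..<k}) = carrier G"
proof
  have "SH \<union> t ` {..<k} \<subseteq> carrier G" using SH subset by auto
  thus "generate G (SH \<union> t ` {..<k}) \<subseteq> carrier G" by (rule generate_incl)
next
  show "carrier G \<subseteq> generate G (SH \<union> t ` {..<k})"
  proof
    fix g assume g: "g \<in> carrier G"
    have GH: "group (G\<lparr>carrier := H\<rparr>)" by (rule subgroup.subgroup_is_group[OF sg is_group])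
    obtain w where w: "fst ` set w \<subseteq> SH" "word_eval (G\<lparr>carrier := H\<rparr>) w = hh g i0"
      using gen_word[OF GH, of SH "hh g i0"] SH hh_H[OF g i0(1)] by auto
    have wH: "fst ` set w \<subseteq> H" using w(1) SH by auto
    have wc: "fst ` set w \<subseteq> carrier G" using wH subset by auto
    have we: "word_eval G w = hh g i0" using word_eval_sub[OF is_group sg wH] w(2) by simp
    have j: "\<sigma> g i0 < k" using sigma[OF g i0(1)] by simp
    define ws where "ws = (t (\<sigma> g i0), True) # (w @ [(t i0, False)])"
    have "word_eval G (w @ [(t i0, False)]) = word_eval G w \<otimes> word_eval G [(t i0, False)]"
      by (rule word_eval_append[OF is_group wc], insert i0, auto)
    hence "word_eval G ws = t (\<sigma> g i0) \<otimes> (hh g i0 \<otimes> inv (t i0))" unfolding ws_def using we i0 by simp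
    hence ev: "word_eval G ws = g" using decomp[OF g i0(1)] by simp
    have lt: "fst ` set ws \<subseteq> SH \<union> t ` {..<k}" unfolding ws_def using w(1) i0 j by auto
    show "g \<in> generate G (SH \<union> t ` {..<k})" using word_eval_gen[OF is_group lt] ev by simp
  qed
qed

end

theorem lemma2p1:
  fixes G :: "('a, 'b) monoid_scheme" and H :: "'a set" and d :: nat and \<rho>0 :: "'a \<Rightarrow> real mat"
  assumes "group G"
    and "H \<lhd> G"
    and "finite (rcosets\<^bsub>G\<^esub> H)"
    and "P_Anosov (G\<lparr>carrier := H\<rparr>) d 1 \<rho>0"
    and "faithful (G\<lparr>carrier := H\<rparr>) \<rho>0"
  shows "\<exists>(r::nat) \<rho>. P_Anosov G r 1 \<rho> \<and> faithful G \<rho>"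
proof -
  interpret N: normal H G by (rule assms(2))
  define k where "k = card (rcosets\<^bsub>G\<^esub> H)"
  obtain cs where cs: "bij_betw cs {..<k} (rcosets\<^bsub>G\<^esub> H)"
    using ex_bij_betw_nat_finite[OF assms(3)] unfolding k_def atLeast0LessThan by blast
  have ne: "\<exists>x. x \<in> cs i" if i: "i < k" for i
  proof -
    have "cs i \<in> rcosets\<^bsub>G\<^esub> H" using cs i by (auto simp: bij_betw_def)
    then obtain a where a: "a \<in> carrier G" "cs i = H #>\<^bsub>G\<^esub> a" unfolding RCOSETS_def by auto
    have "a \<in> H #>\<^bsub>G\<^esub> a" by (rule N.rcos_self[OF a(1) N.subgroup_axioms])
    thus ?thesis using a by blast
  qed
  define t where "t i = (SOME x. x \<in> cs i)" for i
  have t_in: "t i \<in> cs i" if "i < k" for i unfolding t_def using ne[OF that] by (rule someI_ex)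
  have Hr: "H \<in> cs ` {..<k}"
  proof -
    have "H #>\<^bsub>G\<^esub> \<one>\<^bsub>G\<^esub> \<in> rcosets\<^bsub>G\<^esub> H" by (rule N.rcosetsI[OF N.subset N.one_closed])
    hence "H \<in> rcosets\<^bsub>G\<^esub> H" using N.coset_mult_one[OF N.subset] by simp
    thus ?thesis using bij_betw_imp_surj_on[OF cs] by simp
  qed
  define i0 where "i0 = the_inv_into {..<k} cs H"
  have i0: "i0 < k" "cs i0 = H" unfolding i0_def
    using the_inv_into_into[OF bij_betw_imp_inj_on[OF cs] Hr] f_the_inv_into_f[OF bij_betw_imp_inj_on[OF cs] Hr] by auto
  from assms(4) have rep: "SL_rep (G\<lparr>carrier := H\<rparr>) d \<rho>0" and d2: "2 \<le> d"
    and S: "\<exists>S. finite S \<and> S \<subseteq> carrier (G\<lparr>carrier := H\<rparr>) \<and> generate (G\<lparr>carrier := H\<rparr>) S = carrier (G\<lparr>carrier := H\<rparr>) \<and>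
        (\<exists>c C. c > 0 \<and> C > 0 \<and>
           (\<forall>\<gamma>\<in>carrier (G\<lparr>carrier := H\<rparr>). mu 1 (\<rho>0 \<gamma>) - mu (1 + 1) (\<rho>0 \<gamma>) \<ge> c * real (word_length (G\<lparr>carrier := H\<rparr>) S \<gamma>) - C))"
    unfolding P_Anosov_def by auto
  obtain SH c C where SH: "finite SH" "SH \<subseteq> H" "generate (G\<lparr>carrier := H\<rparr>) SH = H"
    and cC: "c > 0" "C > 0"
    and bnd0: "\<forall>\<gamma>\<in>carrier (G\<lparr>carrier := H\<rparr>). mu 1 (\<rho>0 \<gamma>) - mu (1 + 1) (\<rho>0 \<gamma>) \<ge> c * real (word_length (G\<lparr>carrier := H\<rparr>) SH \<gamma>) - C"
    using S by (metis partial_object.select_convs(1) partial_object.surjective partial_object.update_convs(1))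
  have bnd: "mu 1 (\<rho>0 \<gamma>) - mu 2 (\<rho>0 \<gamma>) \<ge> c * real (word_length (G\<lparr>carrier := H\<rparr>) SH \<gamma>) - C" if "\<gamma> \<in> H" for \<gamma>
    using bnd0 that unfolding one_add_one by simp
  have inj: "inj_on \<rho>0 H" using assms(5) unfolding faithful_def by simp
  have loc: "indrep H G k cs t i0 d \<rho>0"
    unfolding indrep_def indrep_axioms_def ind_def ind_axioms_def
    using assms(2) cs t_in i0 rep d2 by auto
  interpret R: indrep H G k cs t i0 d \<rho>0 by (rule loc)
  let ?S = "SH \<union> t ` {..<k}"
  have main: "\<forall>\<gamma>\<in>carrier G. mu 1 (R.RR \<gamma>) - mu (1 + 1) (R.RR \<gamma>) \<ge> c / 2 * real (word_length G ?S \<gamma>) - (c + C / 2 + 1)"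
  proof
    fix \<gamma> assume g: "\<gamma> \<in> carrier G"
    let ?w = "real (word_length G ?S \<gamma>)"
    define \<Lambda> where "\<Lambda> = max 0 (c * (?w - 2) - C)"
    have L: "\<Lambda> \<le> ln (sqrt (R.ES \<gamma> i ! 0)) - ln (sqrt (R.ES \<gamma> i ! 1))" if i: "i < k" for i
    proof -
      have hH: "R.hh \<gamma> i \<in> H" by (rule R.hh_H[OF g i])
      have e: "ln (sqrt (R.ES \<gamma> i ! 0)) - ln (sqrt (R.ES \<gamma> i ! 1)) = mu 1 (\<rho>0 (R.hh \<gamma> i)) - mu 2 (\<rho>0 (R.hh \<gamma> i))"
        unfolding mu_def sing_sq_def R.ES_def R.BB_def by simp
      have wb: "?w \<le> real (word_length (G\<lparr>carrier := H\<rparr>) SH (R.hh \<gamma> i)) + 2"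
        using R.word_bound[OF SH(2,3) g i] by linarith
      have "c * (?w - 2) \<le> c * real (word_length (G\<lparr>carrier := H\<rparr>) SH (R.hh \<gamma> i))"
        using wb cC by (intro mult_left_mono) auto
      hence "c * (?w - 2) - C \<le> ln (sqrt (R.ES \<gamma> i ! 0)) - ln (sqrt (R.ES \<gamma> i ! 1))"
        using bnd[OF hH] e by linarith
      moreover have "0 \<le> ln (sqrt (R.ES \<gamma> i ! 0)) - ln (sqrt (R.ES \<gamma> i ! 1))" by (rule R.fb(1)[OF g i])
      ultimately show ?thesis unfolding \<Lambda>_def by simp
    qed
    have "\<Lambda> / 2 \<le> mu 1 (R.RR \<gamma>) - mu 2 (R.RR \<gamma>)"
      by (rule R.RR_gap[OF g _ L], simp add: \<Lambda>_def)
    moreover have "c / 2 * ?w - (c + C / 2 + 1) \<le> \<Lambda> / 2"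
    proof -
      have "c * (?w - 2) - C \<le> \<Lambda>" unfolding \<Lambda>_def by (rule max.cobounded2)
      hence 2: "(c * (?w - 2) - C) / 2 \<le> \<Lambda> / 2" by (rule divide_right_mono) simp
      have 1: "c / 2 * ?w - (c + C / 2 + 1) \<le> (c * (?w - 2) - C) / 2" by (simp add: field_simps)
      show ?thesis by (rule order_trans[OF 1 2])
    qed
    ultimately show "c / 2 * ?w - (c + C / 2 + 1) \<le> mu 1 (R.RR \<gamma>) - mu (1 + 1) (R.RR \<gamma>)"
      unfolding one_add_one by linarith
  qed
  have fin: "finite ?S" using SH(1) by simp
  have sub: "?S \<subseteq> carrier G" using SH(2) N.subset R.t_carrier by auto
  have gen: "generate G ?S = carrier G" by (rule R.gen_all[OF SH(2,3)])
  have c2: "0 < c / 2" "0 < c + C / 2 + 1" using cC by simp_all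
  have ex: "\<exists>c' C'. c' > 0 \<and> C' > 0 \<and> (\<forall>\<gamma>\<in>carrier G. mu 1 (R.RR \<gamma>) - mu (1 + 1) (R.RR \<gamma>) \<ge> c' * real (word_length G ?S \<gamma>) - C')"
    by (rule exI[of _ "c / 2"], rule exI[of _ "c + C / 2 + 1"], intro conjI c2 main)
  have P: "P_Anosov G (Suc (Suc d ^ k)) 1 R.RR"
    unfolding P_Anosov_def
  proof (intro conjI)
    show "SL_rep G (Suc (Suc d ^ k)) R.RR" by (rule R.RR_SL)
    show "1 \<le> (1::nat)" by simp
    show "1 + 1 \<le> Suc (Suc d ^ k)" by simp
    show "\<exists>S. finite S \<and> S \<subseteq> carrier G \<and> generate G S = carrier G \<and>
        (\<exists>c C. 0 < c \<and> 0 < C \<and> (\<forall>\<gamma>\<in>carrier G. c * real (word_length G S \<gamma>) - C \<le> mu 1 (R.RR \<gamma>) - mu (1 + 1) (R.RR \<gamma>)))"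
      by (rule exI[of _ ?S], intro conjI fin sub gen ex)
  qed
  have F: "faithful G R.RR" unfolding faithful_def by (rule R.RR_inj[OF inj])
  show ?thesis using P F by blast
qed

end
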